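(* Let $A=\{a_1,\dots,a_n\}$ with $n\ge2$. Then $CT(A^{\ast})/I_f(A^{\ast})\cong C_n$.
   Context: $A^{\ast}$ is the free monoid on $A$; $A^{\omega}$ is the set of right-infinite strings over $A$. For $x,y\in A^\ast$, $x\le_p y$ if $x=yz$ for some $z$; a prefix code is a set of pairwise $\le_p$-incomparable strings. A definite language is $X\cup YA^{\ast}$ with $X,Y$ finite; $x\in L$ is unbounded if $xA^{\ast}\subseteq L$, bounded otherwise. A permissible map is a bijection between definite languages preserving boundedness and unboundedness with $\alpha(xy)=\alpha(x)y$ for unbounded $x$ and all $y\in A^\ast$. $CT(A^{\ast})$ is the set of permissible maps (an inverse monoid of partial bijections of $A^\ast$; it is a Boolean inverse $\wedge$-monoid). $I_f(A^{\ast})$ is the set of all bijections between finite subsets of $A^{\ast}$, an additive ideal of $CT(A^{\ast})$ (a semigroup ideal closed under joins of compatible pairs). For a Boolean inverse $\wedge$-semigroup $S$ and additive ideal $I$, $S/I$ denotes $S/\varepsilon_I$ where $(a,b)\in\varepsilon_I$ iff $a\setminus(a\wedge b)\in I$ and $b\setminus(a\wedge b)\in I$; here for $c\le a$, $a\setminus c=a(\mathbf{d}(a)\setminus\mathbf{d}(c))$ with $\mathbf{d}(a)=a^{-1}a$ and $\setminus$ on idempotents the Boolean relative complement. The Cuntz inverse monoid $C_n$ consists of all bijections $f\colon XA^{\omega}\to YA^{\omega}$, with $X,Y$ finite prefix codes, for which there is a bijection $f_1\colon X\to Y$ with $f(xw)=f_1(x)w$ for all $x\in X$, $w\in A^{\omega}$,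 under composition of partial bijections of $A^\omega$. *)

theory Defs
  imports Main "HOL-Library.Omega_Words_Fun" "HOL-Library.Sublist"
begin

text \<open>Partial bijections are maps 'b => 'b option; the product ab of the inverse
semigroup is the map composition a o_m b (apply b first, then a).\<close>

definition omega_strings :: "'a set \<Rightarrow> 'a word set" where
  "omega_strings A = {w. \<forall>i. w i \<in> A}"

definition definite :: "'a set \<Rightarrow> 'a list set \<Rightarrow> bool" where
  "definite A L \<longleftrightarrow> (\<exists>X Y. finite X \<and> finite Y \<and> X \<subseteq> lists A \<and> Y \<subseteq> lists A \<and>
      L = X \<union> {y @ z | y z. y \<in> Y \<and> z \<in> lists A})"

definition unbounded :: "'a set \<Rightarrow> 'a list set \<Rightarrow> 'a list \<Rightarrow> bool" where
  "unbounded A L x \<longleftrightarrow> x \<in> L \<and> {x @ z | z. z \<in> lists A} \<subseteq> L"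

definition permissible :: "'a set \<Rightarrow> ('a list \<Rightarrow> 'a list option) \<Rightarrow> bool" where
  "permissible A \<alpha> \<longleftrightarrow>
     definite A (dom \<alpha>) \<and> definite A (ran \<alpha>) \<and> inj_on \<alpha> (dom \<alpha>) \<and>
     (\<forall>x\<in>dom \<alpha>. unbounded A (dom \<alpha>) x \<longleftrightarrow> unbounded A (ran \<alpha>) (the (\<alpha> x))) \<and>
     (\<forall>x\<in>dom \<alpha>. unbounded A (dom \<alpha>) x \<longrightarrow>
        (\<forall>y\<in>lists A. \<alpha> (x @ y) = Some (the (\<alpha> x) @ y)))"

definition CT :: "'a set \<Rightarrow> ('a list \<Rightarrow> 'a list option) set" where
  "CT A = {\<alpha>. permissible A \<alpha>}"

definition If :: "'a set \<Rightarrow> ('a list \<Rightarrow> 'a list option) set" where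
  "If A = {f. finite (dom f) \<and> dom f \<subseteq> lists A \<and> ran f \<subseteq> lists A \<and> inj_on f (dom f)}"

text \<open>Generic inverse-semigroup notions for a set S of partial bijections,
ordered by the natural partial order (restriction, i.e. map_le).\<close>

definition pinv :: "('b \<Rightarrow> 'b option) \<Rightarrow> ('b \<Rightarrow> 'b option)" where
  "pinv a = (\<lambda>y. if y \<in> ran a then Some (THE x. a x = Some y) else None)"

definition dd :: "('b \<Rightarrow> 'b option) \<Rightarrow> ('b \<Rightarrow> 'b option)" where
  "dd a = pinv a \<circ>\<^sub>m a"

definition idems :: "('b \<Rightarrow> 'b option) set \<Rightarrow> ('b \<Rightarrow> 'b option) set" where
  "idems S = {e\<in>S. e \<circ>\<^sub>m e = e}"

definition glb_in :: "('b \<Rightarrow> 'b option) set \<Rightarrow> ('b \<Rightarrow> 'b option) \<Rightarrow> ('b \<Rightarrow> 'b option) \<Rightarrow> ('b \<Rightarrow> 'b option)" where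
  "glb_in S a b = (THE c. c \<in> S \<and> c \<subseteq>\<^sub>m a \<and> c \<subseteq>\<^sub>m b \<and>
                       (\<forall>d\<in>S. d \<subseteq>\<^sub>m a \<and> d \<subseteq>\<^sub>m b \<longrightarrow> d \<subseteq>\<^sub>m c))"

definition lub_in :: "('b \<Rightarrow> 'b option) set \<Rightarrow> ('b \<Rightarrow> 'b option) \<Rightarrow> ('b \<Rightarrow> 'b option) \<Rightarrow> ('b \<Rightarrow> 'b option)" where
  "lub_in S a b = (THE c. c \<in> S \<and> a \<subseteq>\<^sub>m c \<and> b \<subseteq>\<^sub>m c \<and>
                       (\<forall>d\<in>S. a \<subseteq>\<^sub>m d \<and> b \<subseteq>\<^sub>m d \<longrightarrow> c \<subseteq>\<^sub>m d))"

text \<open>Boolean relative complement e \ f of idempotents (f \<le> e) in the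
generalized Boolean algebra of idempotents of S (zero = empty map).\<close>
definition rel_compl :: "('b \<Rightarrow> 'b option) set \<Rightarrow> ('b \<Rightarrow> 'b option) \<Rightarrow> ('b \<Rightarrow> 'b option) \<Rightarrow> ('b \<Rightarrow> 'b option)" where
  "rel_compl S e f = (THE g. g \<in> idems S \<and> g \<subseteq>\<^sub>m e \<and> glb_in (idems S) g f = Map.empty \<and>
                             lub_in (idems S) g f = e)"

definition sdiff :: "('b \<Rightarrow> 'b option) set \<Rightarrow> ('b \<Rightarrow> 'b option) \<Rightarrow> ('b \<Rightarrow> 'b option) \<Rightarrow> ('b \<Rightarrow> 'b option)" where
  "sdiff S a c = a \<circ>\<^sub>m rel_compl S (dd a) (dd c)"

definition epsI :: "('b \<Rightarrow> 'b option) set \<Rightarrow> ('b \<Rightarrow> 'b option) set \<Rightarrow> (('b \<Rightarrow> 'b option) \<times> ('b \<Rightarrow> 'b option)) set" where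
  "epsI S I = {(a, b). a \<in> S \<and> b \<in> S \<and>
                 sdiff S a (glb_in S a b) \<in> I \<and> sdiff S b (glb_in S a b) \<in> I}"

definition prefix_code :: "'a list set \<Rightarrow> bool" where
  "prefix_code X \<longleftrightarrow> (\<forall>x\<in>X. \<forall>y\<in>X. x \<noteq> y \<longrightarrow> \<not> prefix x y)"

definition cyl :: "'a set \<Rightarrow> 'a list set \<Rightarrow> 'a word set" where
  "cyl A X = {x \<frown> w | x w. x \<in> X \<and> w \<in> omega_strings A}"

definition Cuntz :: "'a set \<Rightarrow> ('a word \<Rightarrow> 'a word option) set" where
  "Cuntz A = {f. \<exists>X Y. finite X \<and> finite Y \<and> X \<subseteq> lists A \<and> Y \<subseteq> lists A \<and>
                 prefix_code X \<and> prefix_code Y \<and>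
                 dom f = cyl A X \<and> ran f = cyl A Y \<and> inj_on f (dom f) \<and>
                 (\<exists>f1. bij_betw f1 X Y \<and>
                    (\<forall>x\<in>X. \<forall>w\<in>omega_strings A. f (x \<frown> w) = Some (f1 x \<frown> w)))}"

end

theory Submission
  imports Defs
begin


definition stab :: "'a set \<Rightarrow> nat \<Rightarrow> 'a list set \<Rightarrow> bool" where
  "stab A N L \<longleftrightarrow> (\<forall>x\<in>lists A. N \<le> length x \<longrightarrow> (x \<in> L \<longleftrightarrow> take N x \<in> L))"

lemma stab_mono: assumes "stab A N L" "N \<le> M" shows "stab A M L"
  unfolding stab_def
proof (intro ballI impI)
  fix x assume x: "x \<in> lists A" "M \<le> length x"
  have t: "take M x \<in> lists A" using x(1) by (meson in_lists_conv_set in_set_takeD)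
  have "x \<in> L \<longleftrightarrow> take N x \<in> L" using assms x unfolding stab_def by auto
  moreover have "take M x \<in> L \<longleftrightarrow> take N (take M x) \<in> L"
    using assms t x unfolding stab_def by auto
  moreover have "take N (take M x) = take N x" using assms(2) by (simp add: min_def)
  ultimately show "x \<in> L \<longleftrightarrow> take M x \<in> L" by simp
qed

lemma stab_Int: "stab A N L1 \<Longrightarrow> stab A N L2 \<Longrightarrow> stab A N (L1 \<inter> L2)"
  unfolding stab_def by auto
lemma stab_Un: "stab A N L1 \<Longrightarrow> stab A N L2 \<Longrightarrow> stab A N (L1 \<union> L2)"
  unfolding stab_def by auto
lemma stab_Diff: "stab A N L1 \<Longrightarrow> stab A N L2 \<Longrightarrow> stab A N (L1 - L2)"
  unfolding stab_def by auto

lemma definite_stab: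
  assumes "definite A L" shows "L \<subseteq> lists A \<and> (\<exists>N. stab A N L)"
proof -
  obtain X Y where XY: "finite X" "finite Y" "X \<subseteq> lists A" "Y \<subseteq> lists A"
    "L = X \<union> {y @ z | y z. y \<in> Y \<and> z \<in> lists A}" using assms unfolding definite_def by blast
  have fin: "finite (length ` (X \<union> Y))" using XY by simp
  obtain N where N: "\<forall>u\<in>X \<union> Y. length u < N"
  proof
    show "\<forall>u\<in>X \<union> Y. length u < Suc (Max (insert 0 (length ` (X \<union> Y))))"
      using fin by (simp add: le_imp_less_Suc)
  qed
  have "L \<subseteq> lists A"
  proof
    fix x assume "x \<in> L"
    then have "x \<in> X \<or> (\<exists>y z. x = y @ z \<and> y \<in> Y \<and> z \<in> lists A)" using XY(5) by blast
    then show "x \<in> lists A"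
    proof
      assume "x \<in> X" then show ?thesis using XY(3) by blast
    next
      assume "\<exists>y z. x = y @ z \<and> y \<in> Y \<and> z \<in> lists A"
      then obtain y z where "x = y @ z" "y \<in> Y" "z \<in> lists A" by blast
      moreover have "y \<in> lists A" using XY(4) calculation(2) by blast
      ultimately show ?thesis by simp
    qed
  qed
  moreover have "stab A N L" unfolding stab_def
  proof (intro ballI impI)
    fix x assume x: "x \<in> lists A" "N \<le> length x"
    have tl: "take N x \<in> lists A" using x(1) by (meson in_lists_conv_set in_set_takeD)
    have "x \<notin> X" using N x(2) by (meson UnI1 not_less)
    moreover have "take N x \<notin> X"
    proof -
      have "length (take N x) = N" using x by simp
      then show ?thesis using N by (metis UnI1 less_irrefl)
    qed
    moreover have "(\<exists>y z. x = y @ z \<and> y \<in> Y \<and> z \<in> lists A) \<longleftrightarrow>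
                   (\<exists>y z. take N x = y @ z \<and> y \<in> Y \<and> z \<in> lists A)"
    proof
      assume "\<exists>y z. x = y @ z \<and> y \<in> Y \<and> z \<in> lists A"
      then obtain y z where yz: "x = y @ z" "y \<in> Y" "z \<in> lists A" by blast
      have ly: "length y < N" using N yz by auto
      have "take N x = y @ take (N - length y) z" using yz ly by simp
      moreover have "take (N - length y) z \<in> lists A" using yz(3) by (meson in_lists_conv_set in_set_takeD)
      ultimately show "\<exists>y z. take N x = y @ z \<and> y \<in> Y \<and> z \<in> lists A" using yz by blast
    next
      assume "\<exists>y z. take N x = y @ z \<and> y \<in> Y \<and> z \<in> lists A"
      then obtain y z where yz: "take N x = y @ z" "y \<in> Y" by blast
      have "x = y @ (z @ drop N x)" using yz by (metis append.assoc append_take_drop_id)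
      moreover have "z @ drop N x \<in> lists A" using x(1) yz
        by (metis append_take_drop_id calculation in_lists_conv_set in_set_dropD Un_iff set_append)
      ultimately show "\<exists>y z. x = y @ z \<and> y \<in> Y \<and> z \<in> lists A" using yz by blast
    qed
    ultimately show "x \<in> L \<longleftrightarrow> take N x \<in> L" using XY(5) by auto
  qed
  ultimately show ?thesis by blast
qed


lemma stabD: "stab A N L \<Longrightarrow> x \<in> lists A \<Longrightarrow> N \<le> length x \<Longrightarrow> x \<in> L \<longleftrightarrow> take N x \<in> L"
  unfolding stab_def by blast

lemma stab_definite:
  assumes fin: "finite A" and sub: "L \<subseteq> lists A" and st: "stab A N L"
  shows "definite A L"
proof -
  define X where "X = {x\<in>L. length x < N}"
  define Y where "Y = {x\<in>L. length x = N}"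
  have fb: "finite {xs. set xs \<subseteq> A \<and> length xs \<le> N}" using fin by (rule finite_lists_length_le)
  have "X \<subseteq> {xs. set xs \<subseteq> A \<and> length xs \<le> N}" using sub unfolding X_def by auto
  then have fX: "finite X" using fb finite_subset by blast
  have "Y \<subseteq> {xs. set xs \<subseteq> A \<and> length xs \<le> N}" using sub unfolding Y_def by auto
  then have fY: "finite Y" using fb finite_subset by blast
  have XA: "X \<subseteq> lists A" "Y \<subseteq> lists A" using sub unfolding X_def Y_def by auto
  have Leq: "L = X \<union> {y @ z | y z. y \<in> Y \<and> z \<in> lists A}"
  proof (intro equalityI subsetI)
    fix x assume x: "x \<in> L"
    show "x \<in> X \<union> {y @ z | y z. y \<in> Y \<and> z \<in> lists A}"
    proof (cases "length x < N")
      case True then show ?thesis using x unfolding X_def by auto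
    next
      case False
      have xl: "x \<in> lists A" using x sub by auto
      have "x \<in> L \<longleftrightarrow> take N x \<in> L" by (rule stabD[OF st xl]) (use False in simp)
      then have "take N x \<in> L" using x by blast
      moreover have "length (take N x) = N" using False by simp
      ultimately have "take N x \<in> Y" unfolding Y_def by simp
      moreover have "drop N x \<in> lists A" using xl by (meson in_lists_conv_set in_set_dropD)
      moreover have "x = take N x @ drop N x" by simp
      ultimately have "x \<in> {y @ z | y z. y \<in> Y \<and> z \<in> lists A}" by blast
      then show ?thesis by (rule UnI2)
    qed
  next
    fix x assume "x \<in> X \<union> {y @ z | y z. y \<in> Y \<and> z \<in> lists A}"
    then show "x \<in> L"
    proof
      assume "x \<in> X" then show ?thesis unfolding X_def by auto
    next
      assume "x \<in> {y @ z | y z. y \<in> Y \<and> z \<in> lists A}"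
      then obtain y z where yz0: "x = y @ z" "y \<in> Y" "z \<in> lists A" by blast
      then have yz: "x = y @ z" "y \<in> L" "length y = N" "z \<in> lists A" unfolding Y_def by auto
      have "y \<in> lists A" using yz sub by auto
      then have "x \<in> lists A" using yz by simp
      moreover have "take N x = y" using yz by simp
      moreover have "N \<le> length x" using yz by simp
      ultimately have "x \<in> L \<longleftrightarrow> take N x \<in> L" using stabD[OF st] by blast
      then show ?thesis using \<open>take N x = y\<close> yz by simp
    qed
  qed
  show ?thesis unfolding definite_def
    apply (rule exI[of _ X], rule exI[of _ Y])
    apply (intro conjI)
    using fX fY XA Leq by simp_all
qed


lemma CT_D:
  assumes "a \<in> CT A"
  shows "definite A (dom a)" "definite A (ran a)" "inj_on a (dom a)"
    "\<And>x. x \<in> dom a \<Longrightarrow> unbounded A (dom a) x \<longleftrightarrow> unbounded A (ran a) (the (a x))"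
    "\<And>x y. x \<in> dom a \<Longrightarrow> unbounded A (dom a) x \<Longrightarrow> y \<in> lists A \<Longrightarrow> a (x @ y) = Some (the (a x) @ y)"
  using assms unfolding CT_def permissible_def by auto

lemma CT_I:
  assumes "definite A (dom a)" "definite A (ran a)" "inj_on a (dom a)"
    "\<And>x. x \<in> dom a \<Longrightarrow> unbounded A (dom a) x \<longleftrightarrow> unbounded A (ran a) (the (a x))"
    "\<And>x y. x \<in> dom a \<Longrightarrow> unbounded A (dom a) x \<Longrightarrow> y \<in> lists A \<Longrightarrow> a (x @ y) = Some (the (a x) @ y)"
  shows "a \<in> CT A"
  using assms unfolding CT_def permissible_def by auto

lemma CT_dom: "a \<in> CT A \<Longrightarrow> dom a \<subseteq> lists A"
  using CT_D(1) definite_stab by blast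
lemma CT_ran: "a \<in> CT A \<Longrightarrow> ran a \<subseteq> lists A"
  using CT_D(2) definite_stab by blast

lemma unbounded_D: "unbounded A L x \<Longrightarrow> z \<in> lists A \<Longrightarrow> x @ z \<in> L"
  unfolding unbounded_def by blast

lemma take_lists: "x \<in> lists A \<Longrightarrow> take n x \<in> lists A"
  by (meson in_lists_conv_set in_set_takeD)
lemma drop_lists: "x \<in> lists A \<Longrightarrow> drop n x \<in> lists A"
  by (meson in_lists_conv_set in_set_dropD)

definition valid :: "'a set \<Rightarrow> ('a list \<Rightarrow> 'a list option) \<Rightarrow> nat \<Rightarrow> bool" where
  "valid A a N \<longleftrightarrow> stab A N (dom a) \<and>
     (\<forall>x\<in>dom a. N \<le> length x \<longrightarrow> a x = Some (the (a (take N x)) @ drop N x))"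

lemma stab_unb:
  assumes st: "stab A N L" and sub: "L \<subseteq> lists A" and x: "x \<in> L" and len: "N \<le> length x"
  shows "unbounded A L x"
  unfolding unbounded_def
proof (intro conjI x subsetI)
  fix v assume "v \<in> {x @ z |z. z \<in> lists A}"
  then obtain z where z: "v = x @ z" "z \<in> lists A" by blast
  have xl: "x \<in> lists A" using x sub by blast
  have vl: "v \<in> lists A" using z xl by simp
  have tk: "take N v = take N x" using z len by simp
  have "v \<in> L \<longleftrightarrow> take N v \<in> L" by (rule stabD[OF st vl]) (use z len in simp)
  moreover have "x \<in> L \<longleftrightarrow> take N x \<in> L" by (rule stabD[OF st xl len])
  ultimately show "v \<in> L" using x tk by simp
qed

lemma valid_ex:
  assumes a: "a \<in> CT A" shows "\<exists>N. valid A a N"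
proof -
  obtain N where st: "stab A N (dom a)" using definite_stab[OF CT_D(1)[OF a]] by blast
  have sub: "dom a \<subseteq> lists A" using CT_dom[OF a] .
  have "\<forall>x\<in>dom a. N \<le> length x \<longrightarrow> a x = Some (the (a (take N x)) @ drop N x)"
  proof (intro ballI impI)
    fix x assume x: "x \<in> dom a" and len: "N \<le> length x"
    have xl: "x \<in> lists A" using x sub by blast
    have "x \<in> dom a \<longleftrightarrow> take N x \<in> dom a" by (rule stabD[OF st xl len])
    then have t: "take N x \<in> dom a" using x by blast
    have "unbounded A (dom a) (take N x)" by (rule stab_unb[OF st sub t]) (use len in simp)
    then have "a (take N x @ drop N x) = Some (the (a (take N x)) @ drop N x)"
      using CT_D(5)[OF a t] drop_lists[OF xl] by blast
    then show "a x = Some (the (a (take N x)) @ drop N x)" by simp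
  qed
  then show ?thesis using st unfolding valid_def by blast
qed

lemma valid_stab: "valid A a N \<Longrightarrow> stab A N (dom a)"
  unfolding valid_def by blast

lemma valid_eq: "valid A a N \<Longrightarrow> x \<in> dom a \<Longrightarrow> N \<le> length x \<Longrightarrow>
   a x = Some (the (a (take N x)) @ drop N x)"
  unfolding valid_def by blast

lemma valid_unb:
  assumes "valid A a N" "a \<in> CT A" "x \<in> dom a" "N \<le> length x"
  shows "unbounded A (dom a) x"
  using stab_unb[OF valid_stab[OF assms(1)] CT_dom[OF assms(2)] assms(3,4)] .

lemma valid_app:
  assumes "valid A a N" "a \<in> CT A" "x \<in> dom a" "N \<le> length x" "z \<in> lists A"
  shows "a (x @ z) = Some (the (a x) @ z)"
  using CT_D(5)[OF assms(2,3) valid_unb[OF assms(1-4)] assms(5)] .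

lemma valid_mono:
  assumes v: "valid A a N" and a: "a \<in> CT A" and NM: "N \<le> M" shows "valid A a M"
  unfolding valid_def
proof (intro conjI ballI impI)
  show "stab A M (dom a)" using stab_mono[OF valid_stab[OF v] NM] .
  fix x assume x: "x \<in> dom a" and len: "M \<le> length x"
  have xl: "x \<in> lists A" using x CT_dom[OF a] by blast
  have "x = take M x @ drop M x" by simp
  have tM: "take M x \<in> dom a"
  proof -
    have "x \<in> dom a \<longleftrightarrow> take M x \<in> dom a"
      by (rule stabD[OF stab_mono[OF valid_stab[OF v] NM] xl len])
    then show ?thesis using x by blast
  qed
  have "a (take M x @ drop M x) = Some (the (a (take M x)) @ drop M x)"
    by (rule valid_app[OF v a tM]) (use len NM drop_lists[OF xl] in simp_all)
  then show "a x = Some (the (a (take M x)) @ drop M x)" by simp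
qed

definition idm :: "'b set \<Rightarrow> 'b \<Rightarrow> 'b option" where
  "idm L = (\<lambda>x. if x \<in> L then Some x else None)"

lemma dom_idm[simp]: "dom (idm L) = L" unfolding idm_def dom_def by auto
lemma ran_idm[simp]: "ran (idm L) = L" unfolding idm_def ran_def by auto
lemma idm_Some[simp]: "idm L x = Some y \<longleftrightarrow> x \<in> L \<and> y = x" unfolding idm_def by auto
lemma idm_in[simp]: "x \<in> L \<Longrightarrow> idm L x = Some x" unfolding idm_def by auto
lemma idm_out[simp]: "x \<notin> L \<Longrightarrow> idm L x = None" unfolding idm_def by auto

lemma idm_CT: assumes "definite A L" shows "idm L \<in> CT A"
proof (rule CT_I)
  show "definite A (dom (idm L))" "definite A (ran (idm L))" using assms by simp_all
  show "inj_on (idm L) (dom (idm L))" unfolding inj_on_def idm_def by auto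
  fix x assume x: "x \<in> dom (idm L)"
  then show "unbounded A (dom (idm L)) x \<longleftrightarrow> unbounded A (ran (idm L)) (the (idm L x))" by simp
  fix y assume "unbounded A (dom (idm L)) x" "y \<in> lists A"
  then have "x @ y \<in> L" using unbounded_D by fastforce
  then show "idm L (x @ y) = Some (the (idm L x) @ y)" using x by simp
qed

lemma pinv_Some:
  assumes "inj_on a (dom a)" shows "pinv a y = Some x \<longleftrightarrow> a x = Some y"
proof
  assume h: "pinv a y = Some x"
  then have y: "y \<in> ran a" unfolding pinv_def by (auto split: if_splits)
  then obtain x0 where x0: "a x0 = Some y" unfolding ran_def by blast
  have u: "\<And>x'. a x' = Some y \<Longrightarrow> x' = x0" using assms x0 unfolding inj_on_def by (metis domI)
  have "(THE x. a x = Some y) = x0" using x0 u by blast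
  then show "a x = Some y" using h y x0 unfolding pinv_def by simp
next
  assume h: "a x = Some y"
  then have y: "y \<in> ran a" unfolding ran_def by blast
  have u: "\<And>x'. a x' = Some y \<Longrightarrow> x' = x" using assms h unfolding inj_on_def by (metis domI)
  have "(THE x'. a x' = Some y) = x" using h u by blast
  then show "pinv a y = Some x" using y unfolding pinv_def by simp
qed

lemma dom_pinv: "dom (pinv a) = ran a"
  unfolding pinv_def dom_def by auto

lemma ran_pinv: assumes "inj_on a (dom a)" shows "ran (pinv a) = dom a"
  unfolding ran_def dom_def by (simp add: pinv_Some[OF assms])

lemma inj_pinv: assumes "inj_on a (dom a)" shows "inj_on (pinv a) (dom (pinv a))"
  unfolding inj_on_def
proof (intro ballI impI)
  fix y1 y2 assume "y1 \<in> dom (pinv a)" "y2 \<in> dom (pinv a)" "pinv a y1 = pinv a y2"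
  then obtain x where "pinv a y1 = Some x" "pinv a y2 = Some x" by (metis domD)
  then have "a x = Some y1" "a x = Some y2" using pinv_Some[OF assms] by blast+
  then show "y1 = y2" by simp
qed

lemma pinv_CT: assumes a: "a \<in> CT A" shows "pinv a \<in> CT A"
proof (rule CT_I)
  have inj: "inj_on a (dom a)" using CT_D(3)[OF a] .
  note ps = pinv_Some[OF inj]
  show "definite A (dom (pinv a))" using CT_D(2)[OF a] by (simp add: dom_pinv)
  show "definite A (ran (pinv a))" using CT_D(1)[OF a] by (simp add: ran_pinv[OF inj])
  show "inj_on (pinv a) (dom (pinv a))" by (rule inj_pinv[OF inj])
  fix y assume y: "y \<in> dom (pinv a)"
  then obtain x where x: "pinv a y = Some x" by blast
  then have ax: "a x = Some y" using ps by blast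
  then have xd: "x \<in> dom a" by blast
  show "unbounded A (dom (pinv a)) y \<longleftrightarrow> unbounded A (ran (pinv a)) (the (pinv a y))"
    using CT_D(4)[OF a xd] ax x by (simp add: dom_pinv ran_pinv[OF inj])
  fix z assume u: "unbounded A (dom (pinv a)) y" and z: "z \<in> lists A"
  have "unbounded A (dom a) x" using CT_D(4)[OF a xd] ax u by (simp add: dom_pinv)
  then have "a (x @ z) = Some (y @ z)" using CT_D(5)[OF a xd _ z] ax by simp
  then have "pinv a (y @ z) = Some (x @ z)" using ps by blast
  then show "pinv a (y @ z) = Some (the (pinv a y) @ z)" using x by simp
qed


lemma dd_eq: assumes "inj_on a (dom a)" shows "dd a = idm (dom a)"
proof
  fix x show "dd a x = idm (dom a) x"
  proof (cases "a x")
    case None then show ?thesis unfolding dd_def by (simp add: domIff)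
  next
    case (Some y)
    then have "pinv a y = Some x" using pinv_Some[OF assms] by blast
    then show ?thesis using Some unfolding dd_def by (simp add: domI)
  qed
qed

lemma dom_comp: "dom (a \<circ>\<^sub>m b) = {x\<in>dom b. the (b x) \<in> dom a}"
  unfolding map_comp_def dom_def by (auto split: option.splits)

lemma comp_Some: "(a \<circ>\<^sub>m b) x = Some z \<longleftrightarrow> (\<exists>y. b x = Some y \<and> a y = Some z)"
  unfolding map_comp_def by (auto split: option.splits)

lemma inj_Some: "inj_on a (dom a) \<Longrightarrow> a x = Some y \<Longrightarrow> a x' = Some y \<Longrightarrow> x = x'"
  by (rule inj_onD[of a "dom a" x x']) auto

lemma the_ran: "x \<in> dom b \<Longrightarrow> the (b x) \<in> ran b"
  by (auto simp: ran_def)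

lemma unbounded_mono: "unbounded A L x \<Longrightarrow> L \<subseteq> L' \<Longrightarrow> unbounded A L' x"
  unfolding unbounded_def by blast

lemma preimage_stab:
  assumes v: "valid A b N" and b: "b \<in> CT A" and st: "stab A K L"
  shows "stab A (N+K) {x\<in>dom b. the (b x) \<in> L}"
  unfolding stab_def
proof (intro ballI impI)
  fix x assume xl: "x \<in> lists A" and len: "N + K \<le> length x"
  define t where "t = take (N+K) x"
  have stb: "stab A (N+K) (dom b)" using stab_mono[OF valid_stab[OF v]] by simp
  have dd: "x \<in> dom b \<longleftrightarrow> t \<in> dom b" unfolding t_def by (rule stabD[OF stb xl len])
  show "x \<in> {x\<in>dom b. the (b x) \<in> L} \<longleftrightarrow> take (N+K) x \<in> {x\<in>dom b. the (b x) \<in> L}"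
  proof (cases "x \<in> dom b")
    case False then show ?thesis using dd unfolding t_def by simp
  next
    case True
    then have tb: "t \<in> dom b" using dd by blast
    define v where "v = the (b (take N x))"
    have tN: "take N t = take N x" unfolding t_def by (simp add: min_def)
    have lt: "length t = N + K" unfolding t_def using len by simp
    have bx: "the (b x) = v @ drop N x" using valid_eq[OF v True] len unfolding v_def by simp
    have bt: "the (b t) = v @ drop N t" using valid_eq[OF v tb] lt tN unfolding v_def by simp
    have dt: "drop N t = take K (drop N x)" unfolding t_def by (simp add: drop_take)
    have bxl: "the (b x) \<in> lists A" using CT_ran[OF b] the_ran[OF True] by blast
    have btl: "the (b t) \<in> lists A" using CT_ran[OF b] the_ran[OF tb] by blast
    have l1: "K \<le> length (the (b x))" using bx len by simp
    have l2: "K \<le> length (the (b t))" using bt dt len by simp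
    have "the (b x) \<in> L \<longleftrightarrow> take K (the (b x)) \<in> L" by (rule stabD[OF st bxl l1])
    moreover have "the (b t) \<in> L \<longleftrightarrow> take K (the (b t)) \<in> L" by (rule stabD[OF st btl l2])
    moreover have "take K (the (b x)) = take K (the (b t))"
      unfolding bx bt dt by (simp add: min_def)
    ultimately have "the (b x) \<in> L \<longleftrightarrow> the (b t) \<in> L" by simp
    then show ?thesis using True tb unfolding t_def by simp
  qed
qed

lemma ran_comp_eq: assumes "inj_on a (dom a)"
  shows "ran (a \<circ>\<^sub>m b) = {y\<in>dom (pinv a). the (pinv a y) \<in> ran b}"
proof (intro equalityI subsetI)
  fix y assume "y \<in> ran (a \<circ>\<^sub>m b)"
  then obtain x where "(a \<circ>\<^sub>m b) x = Some y" unfolding ran_def by blast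
  then obtain u where u: "b x = Some u" "a u = Some y" unfolding comp_Some by blast
  then have "pinv a y = Some u" using pinv_Some[OF assms] by blast
  moreover have "u \<in> ran b" using u by (meson ranI)
  ultimately show "y \<in> {y\<in>dom (pinv a). the (pinv a y) \<in> ran b}" by auto
next
  fix y assume "y \<in> {y\<in>dom (pinv a). the (pinv a y) \<in> ran b}"
  then obtain u where u: "pinv a y = Some u" "u \<in> ran b" by auto
  then obtain x where "b x = Some u" unfolding ran_def by blast
  moreover have "a u = Some y" using u pinv_Some[OF assms] by blast
  ultimately have "(a \<circ>\<^sub>m b) x = Some y" unfolding comp_Some by blast
  then show "y \<in> ran (a \<circ>\<^sub>m b)" by (meson ranI)
qed

lemma comp_CT:
  assumes fin: "finite A" and a: "a \<in> CT A" and b: "b \<in> CT A"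
  shows "a \<circ>\<^sub>m b \<in> CT A"
proof (rule CT_I)
  let ?c = "a \<circ>\<^sub>m b"
  have ia: "inj_on a (dom a)" and ib: "inj_on b (dom b)" using CT_D(3) a b by blast+
  obtain Nb where vb: "valid A b Nb" using valid_ex[OF b] by blast
  obtain Na where va: "valid A a Na" using valid_ex[OF a] by blast
  have "stab A (Nb + Na) (dom ?c)"
    unfolding dom_comp by (rule preimage_stab[OF vb b valid_stab[OF va]])
  moreover have "dom ?c \<subseteq> lists A" using CT_dom[OF b] unfolding dom_comp by blast
  ultimately show "definite A (dom ?c)" using stab_definite[OF fin] by blast
  have pa: "pinv a \<in> CT A" by (rule pinv_CT[OF a])
  obtain Np where vp: "valid A (pinv a) Np" using valid_ex[OF pa] by blast
  obtain Kb where kb: "stab A Kb (ran b)" using definite_stab[OF CT_D(2)[OF b]] by blast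
  have "stab A (Np + Kb) (ran ?c)"
    unfolding ran_comp_eq[OF ia] by (rule preimage_stab[OF vp pa kb])
  moreover have "ran ?c \<subseteq> lists A" using CT_dom[OF pa] unfolding ran_comp_eq[OF ia] by blast
  ultimately show "definite A (ran ?c)" using stab_definite[OF fin] by blast
  show "inj_on ?c (dom ?c)" unfolding inj_on_def
  proof (intro ballI impI)
    fix x1 x2 assume "x1 \<in> dom ?c" "x2 \<in> dom ?c" "?c x1 = ?c x2"
    then obtain y where "?c x1 = Some y" "?c x2 = Some y" by (metis domD)
    then obtain u1 u2 where h: "b x1 = Some u1" "a u1 = Some y" "b x2 = Some u2" "a u2 = Some y"
      unfolding comp_Some by blast
    then have "u1 = u2" using inj_Some[OF ia] by blast
    then show "x1 = x2" using inj_Some[OF ib] h by blast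
  qed
  have rsub: "ran ?c \<subseteq> ran a"
  proof
    fix y assume "y \<in> ran ?c"
    then obtain x where "?c x = Some y" unfolding ran_def by blast
    then obtain u where "a u = Some y" unfolding comp_Some by blast
    then show "y \<in> ran a" by (rule ranI)
  qed
  have key: "unbounded A (ran ?c) (the (?c x)) \<and> (\<forall>z\<in>lists A. ?c (x @ z) = Some (the (?c x) @ z))"
    if x: "x \<in> dom ?c" and ux: "unbounded A (dom ?c) x" for x
  proof -
    obtain v where cv: "?c x = Some v" using x by blast
    then obtain u where u: "b x = Some u" "a u = Some v" unfolding comp_Some by blast
    have "dom ?c \<subseteq> dom b" unfolding dom_comp by blast
    then have ub: "unbounded A (dom b) x" using unbounded_mono[OF ux] by blast
    have xb: "x \<in> dom b" using u by blast
    have ua: "u \<in> dom a" using u by blast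
    have bz: "b (x @ z) = Some (u @ z)" if "z \<in> lists A" for z
      using CT_D(5)[OF b xb ub that] u by simp
    have "u @ z \<in> dom a" if z: "z \<in> lists A" for z
    proof -
      have "x @ z \<in> dom ?c" using unbounded_D[OF ux z] .
      then show ?thesis using bz[OF z] unfolding dom_comp by simp
    qed
    then have "unbounded A (dom a) u" using ua unfolding unbounded_def by blast
    then have az: "a (u @ z) = Some (v @ z)" if "z \<in> lists A" for z
      using CT_D(5)[OF a ua _ that] u by simp
    have cz: "?c (x @ z) = Some (v @ z)" if "z \<in> lists A" for z
      unfolding comp_Some using bz[OF that] az[OF that] by blast
    have "v @ z \<in> ran ?c" if "z \<in> lists A" for z using cz[OF that] by (meson ranI)
    moreover have "v \<in> ran ?c" using cv by (meson ranI)
    ultimately have "unbounded A (ran ?c) v" unfolding unbounded_def by blast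
    then show ?thesis using cz cv by simp
  qed
  fix x assume x: "x \<in> dom ?c"
  show "unbounded A (dom ?c) x \<longleftrightarrow> unbounded A (ran ?c) (the (?c x))"
  proof
    assume "unbounded A (dom ?c) x" then show "unbounded A (ran ?c) (the (?c x))" using key x by blast
  next
    assume uv: "unbounded A (ran ?c) (the (?c x))"
    obtain v where cv: "?c x = Some v" using x by blast
    then obtain u where u: "b x = Some u" "a u = Some v" unfolding comp_Some by blast
    have xb: "x \<in> dom b" using u by blast
    have ua: "u \<in> dom a" using u by blast
    have "unbounded A (ran a) v" using unbounded_mono[OF uv rsub] cv by simp
    then have uda: "unbounded A (dom a) u" using CT_D(4)[OF a ua] u by simp
    have "u @ z \<in> ran b" if z: "z \<in> lists A" for z
    proof -
      have "v @ z \<in> ran ?c" using unbounded_D[OF uv z] cv by simp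
      then obtain x' where "?c x' = Some (v @ z)" unfolding ran_def by blast
      then obtain u' where u': "b x' = Some u'" "a u' = Some (v @ z)" unfolding comp_Some by blast
      have "a (u @ z) = Some (v @ z)" using CT_D(5)[OF a ua uda z] u by simp
      then have "u' = u @ z" using inj_Some[OF ia] u' by blast
      then show ?thesis using u' by (meson ranI)
    qed
    moreover have "u \<in> ran b" using u by (meson ranI)
    ultimately have "unbounded A (ran b) u" unfolding unbounded_def by blast
    then have udb: "unbounded A (dom b) x" using CT_D(4)[OF b xb] u by simp
    have "x @ z \<in> dom ?c" if z: "z \<in> lists A" for z
    proof -
      have "b (x @ z) = Some (u @ z)" using CT_D(5)[OF b xb udb z] u by simp
      moreover have "a (u @ z) = Some (v @ z)" using CT_D(5)[OF a ua uda z] u by simp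
      ultimately have "?c (x @ z) = Some (v @ z)" unfolding comp_Some by blast
      then show ?thesis by blast
    qed
    then show "unbounded A (dom ?c) x" using x unfolding unbounded_def by blast
  qed
  fix z assume "unbounded A (dom ?c) x" "z \<in> lists A"
  then show "?c (x @ z) = Some (the (?c x) @ z)" using key x by blast
qed


abbreviation sfx :: "nat \<Rightarrow> 'a word \<Rightarrow> 'a word" where "sfx \<equiv> Omega_Words_Fun.suffix"

lemma omega_iff: "w \<in> omega_strings A \<longleftrightarrow> (\<forall>i. w i \<in> A)"
  unfolding omega_strings_def by simp

lemma conc_omega: "u \<in> lists A \<Longrightarrow> s \<in> omega_strings A \<Longrightarrow> u \<frown> s \<in> omega_strings A"
  unfolding omega_strings_def conc_def by (auto simp: in_lists_conv_set)

lemma subseq_lists: "w \<in> omega_strings A \<Longrightarrow> subsequence w i j \<in> lists A"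
  unfolding omega_strings_def by (auto simp: in_lists_conv_set)

lemma suffix_omega: "w \<in> omega_strings A \<Longrightarrow> sfx k w \<in> omega_strings A"
  unfolding omega_strings_def by simp

lemma conc_prefix:
  assumes "u \<frown> s = v \<frown> t" "length u \<le> length v" shows "Sublist.prefix u v"
proof -
  have "subsequence (u \<frown> s) 0 (length u) = u" by simp
  moreover have "subsequence (v \<frown> t) 0 (length u) = take (length u) v"
    using assms(2) by (rule prefix_conc_fst)
  ultimately have "u = take (length u) v" using assms(1) by simp
  then show ?thesis by (metis take_is_prefix)
qed

lemma conc_prefix2:
  assumes "u \<frown> s = v \<frown> t" shows "Sublist.prefix u v \<or> Sublist.prefix v u"
  using conc_prefix[OF assms] conc_prefix[OF assms[symmetric]] by (cases "length u \<le> length v") auto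

definition hat :: "'a set \<Rightarrow> ('a list \<Rightarrow> 'a list option) \<Rightarrow> 'a word \<Rightarrow> 'a word option" where
  "hat A a w = (if w \<in> omega_strings A \<and> (\<exists>k. unbounded A (dom a) (subsequence w 0 k))
     then Some (the (a (subsequence w 0 (LEAST k. unbounded A (dom a) (subsequence w 0 k))))
              \<frown> sfx (LEAST k. unbounded A (dom a) (subsequence w 0 k)) w)
     else None)"

lemma hat_unb:
  assumes a: "a \<in> CT A" and w: "w \<in> omega_strings A" and u: "unbounded A (dom a) (subsequence w 0 k)"
  shows "hat A a w = Some (the (a (subsequence w 0 k)) \<frown> sfx k w)"
proof -
  define k0 where "k0 = (LEAST k. unbounded A (dom a) (subsequence w 0 k))"
  have u0: "unbounded A (dom a) (subsequence w 0 k0)" unfolding k0_def by (rule LeastI[where P="\<lambda>k. unbounded A (dom a) (subsequence w 0 k)", OF u])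
  have le: "k0 \<le> k" unfolding k0_def by (rule Least_le[where P="\<lambda>k. unbounded A (dom a) (subsequence w 0 k)", OF u])
  define d where "d = subsequence w k0 k"
  have split: "subsequence w 0 k = subsequence w 0 k0 @ d"
    unfolding d_def using subsequence_append[where i=k0 and j="k - k0" and w=w] le by simp
  have dl: "d \<in> lists A" unfolding d_def using subseq_lists[OF w] .
  have p0: "subsequence w 0 k0 \<in> dom a" using u0 unfolding unbounded_def by blast
  have "a (subsequence w 0 k) = Some (the (a (subsequence w 0 k0)) @ d)"
    unfolding split by (rule CT_D(5)[OF a p0 u0 dl])
  moreover have "d \<frown> sfx k w = sfx k0 w" unfolding d_def using le by simp
  moreover have "hat A a w = Some (the (a (subsequence w 0 k0)) \<frown> sfx k0 w)"
    unfolding hat_def k0_def using w u by auto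
  ultimately show ?thesis by (metis conc_conc option.sel)
qed

lemma hat_SomeD: "hat A a w = Some y \<Longrightarrow> w \<in> omega_strings A \<and> (\<exists>k. unbounded A (dom a) (subsequence w 0 k))"
  unfolding hat_def by (auto split: if_splits)

lemma hat_valid:
  assumes v: "valid A a N" and a: "a \<in> CT A" and ul: "u \<in> lists A" and len: "N \<le> length u"
    and s: "s \<in> omega_strings A"
  shows "hat A a (u \<frown> s) = (if u \<in> dom a then Some (the (a u) \<frown> s) else None)"
proof (cases "u \<in> dom a")
  case True
  have "unbounded A (dom a) u" by (rule valid_unb[OF v a True len])
  then have "unbounded A (dom a) (subsequence (u \<frown> s) 0 (length u))" by simp
  then have "hat A a (u \<frown> s) = Some (the (a (subsequence (u \<frown> s) 0 (length u))) \<frown> sfx (length u) (u \<frown> s))"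
    by (rule hat_unb[OF a conc_omega[OF ul s]])
  then show ?thesis using True by simp
next
  case False
  have "hat A a (u \<frown> s) = None"
  proof (rule ccontr)
    assume "hat A a (u \<frown> s) \<noteq> None"
    then obtain k where k: "unbounded A (dom a) (subsequence (u \<frown> s) 0 k)"
      using hat_SomeD by blast
    have pk: "subsequence (u \<frown> s) 0 k \<in> dom a" using k unfolding unbounded_def by blast
    show False
    proof (cases "k \<le> length u")
      case True
      then have eq: "subsequence (u \<frown> s) 0 k = take k u" by (rule prefix_conc_fst)
      have "take k u @ drop k u \<in> dom a"
        using unbounded_D[OF k[unfolded eq] drop_lists[OF ul, of k]] by simp
      then show False using False by simp
    next
      case nk: False
      have eq: "subsequence (u \<frown> s) 0 k = u @ subsequence s 0 (k - length u)"
        by (rule prefix_conc_snd) (use nk in simp)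
      define p where "p = u @ subsequence s 0 (k - length u)"
      have pd: "p \<in> dom a" using pk by (simp only: eq p_def)
      have pl: "p \<in> lists A" unfolding p_def using ul subseq_lists[OF s, of 0 "k - length u"] by simp
      have lp: "N \<le> length p" unfolding p_def using len by simp
      have "p \<in> dom a \<longleftrightarrow> take N p \<in> dom a" by (rule stabD[OF valid_stab[OF v] pl lp])
      moreover have "take N p = take N u" unfolding p_def using len by simp
      moreover have "u \<in> dom a \<longleftrightarrow> take N u \<in> dom a" by (rule stabD[OF valid_stab[OF v] ul len])
      ultimately show False using pd False by metis
    qed
  qed
  then show ?thesis using False by simp
qed

lemma hat_outside: "w \<notin> omega_strings A \<Longrightarrow> hat A a w = None"
  unfolding hat_def by simp

lemma hat_split:
  assumes v: "valid A a N" and a: "a \<in> CT A" and w: "w \<in> omega_strings A"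
  shows "hat A a w = (if subsequence w 0 N \<in> dom a then Some (the (a (subsequence w 0 N)) \<frown> sfx N w) else None)"
proof -
  have "hat A a w = hat A a (subsequence w 0 N \<frown> sfx N w)" by simp
  also have "\<dots> = (if subsequence w 0 N \<in> dom a then Some (the (a (subsequence w 0 N)) \<frown> sfx N w) else None)"
    by (rule hat_valid[OF v a subseq_lists[OF w]]) (use suffix_omega[OF w] in simp_all)
  finally show ?thesis .
qed

lemma cylN:
  assumes "\<forall>x\<in>X. length x = N" "X \<subseteq> lists A"
  shows "w \<in> cyl A X \<longleftrightarrow> w \<in> omega_strings A \<and> subsequence w 0 N \<in> X"
proof
  assume "w \<in> cyl A X"
  then obtain x w' where xw: "w = x \<frown> w'" "x \<in> X" "w' \<in> omega_strings A" unfolding cyl_def by blast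
  have "length x = N" using assms xw by blast
  then have "subsequence w 0 N = x" using xw by (metis prefix_conc_length)
  moreover have "w \<in> omega_strings A"
  proof -
    have "x \<in> lists A" using xw(2) assms(2) by blast
    then show ?thesis unfolding xw(1) by (rule conc_omega[OF _ xw(3)])
  qed
  ultimately show "w \<in> omega_strings A \<and> subsequence w 0 N \<in> X" using xw by simp
next
  assume h: "w \<in> omega_strings A \<and> subsequence w 0 N \<in> X"
  have e: "w = subsequence w 0 N \<frown> sfx N w" by simp
  have o: "sfx N w \<in> omega_strings A" using h suffix_omega by blast
  show "w \<in> cyl A X" unfolding cyl_def
    by (intro CollectI exI[of _ "subsequence w 0 N"] exI[of _ "sfx N w"] conjI e o) (use h in blast)
qed


lemma hat_Cuntz:
  assumes fin: "finite A" and a: "a \<in> CT A"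
  shows "hat A a \<in> Cuntz A"
proof -
  obtain N where v: "valid A a N" using valid_ex[OF a] by blast
  define X where "X = {x\<in>dom a. length x = N}"
  define f1 where "f1 = (\<lambda>x. the (a x))"
  define Y where "Y = f1 ` X"
  have ia: "inj_on a (dom a)" using CT_D(3)[OF a] .
  have XA: "X \<subseteq> lists A" unfolding X_def using CT_dom[OF a] by blast
  have XN: "\<forall>x\<in>X. length x = N" unfolding X_def by blast
  have "X \<subseteq> {xs. set xs \<subseteq> A \<and> length xs \<le> N}" using XA XN by auto
  then have finX: "finite X" using finite_lists_length_le[OF fin, of N] finite_subset by blast
  have finY: "finite Y" unfolding Y_def using finX by simp
  have YA: "Y \<subseteq> lists A"
  proof
    fix y assume "y \<in> Y"
    then obtain x where x: "x \<in> X" "y = the (a x)" unfolding Y_def f1_def by blast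
    have "x \<in> dom a" using x X_def by blast
    then have "y \<in> ran a" using x the_ran by metis
    then show "y \<in> lists A" using CT_ran[OF a] by blast
  qed
  have XD: "x \<in> dom a" if "x \<in> X" for x using that X_def by blast
  have aX: "a x = Some (f1 x)" if "x \<in> X" for x using XD[OF that] unfolding f1_def by auto
  have pcX: "prefix_code X" unfolding prefix_code_def
  proof (intro ballI impI notI)
    fix x y assume xy: "x \<in> X" "y \<in> X" "x \<noteq> y" "Sublist.prefix x y"
    then obtain zs where "y = x @ zs" by (blast elim: prefixE)
    moreover have "length x = length y" using xy XN by simp
    ultimately show False using xy(3) by simp
  qed
  have app: "a (x @ z) = Some (f1 x @ z)" if "x \<in> X" "z \<in> lists A" for x z
    using valid_app[OF v a XD[OF that(1)] _ that(2)] XN that(1) unfolding f1_def by simp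
  have pcY: "prefix_code Y" unfolding prefix_code_def
  proof (intro ballI impI notI)
    fix y y' assume yy: "y \<in> Y" "y' \<in> Y" "y \<noteq> y'" "Sublist.prefix y y'"
    obtain x where x: "x \<in> X" "y = f1 x" using yy(1) unfolding Y_def by blast
    obtain x' where x': "x' \<in> X" "y' = f1 x'" using yy(2) unfolding Y_def by blast
    obtain z where z: "y' = y @ z" using yy(4) by (blast elim: prefixE)
    have "y' \<in> lists A" using yy(2) YA by blast
    then have zl: "z \<in> lists A" using z by simp
    have "a (x @ z) = Some y'" using app[OF x(1) zl] x z by simp
    moreover have "a x' = Some y'" using aX[OF x'(1)] x' by simp
    ultimately have "x @ z = x'" using inj_Some[OF ia] by blast
    moreover have "length x = N" "length x' = N" using XN x(1) x'(1) by auto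
    ultimately have "z = []" by auto
    then show False using z yy(3) by simp
  qed
  have hX: "hat A a (x \<frown> w) = Some (f1 x \<frown> w)" if "x \<in> X" "w \<in> omega_strings A" for x w
  proof -
    have "hat A a (x \<frown> w) = (if x \<in> dom a then Some (the (a x) \<frown> w) else None)"
      by (rule hat_valid[OF v a]) (use that XA XN in auto)
    then show ?thesis using XD[OF that(1)] unfolding f1_def by simp
  qed
  have domh: "dom (hat A a) = cyl A X"
  proof (intro equalityI subsetI)
    fix w assume "w \<in> dom (hat A a)"
    then obtain y where hy: "hat A a w = Some y" by blast
    then have wo: "w \<in> omega_strings A" using hat_SomeD by blast
    have "subsequence w 0 N \<in> dom a"
    proof (rule ccontr)
      assume "subsequence w 0 N \<notin> dom a"
      then have "hat A a w = None" using hat_split[OF v a wo] by simp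
      then show False using hy by simp
    qed
    then have "subsequence w 0 N \<in> X" unfolding X_def by simp
    then show "w \<in> cyl A X" using cylN[OF XN XA] wo by blast
  next
    fix w assume "w \<in> cyl A X"
    then obtain x w' where "w = x \<frown> w'" "x \<in> X" "w' \<in> omega_strings A" unfolding cyl_def by blast
    then show "w \<in> dom (hat A a)" using hX by blast
  qed
  have ranh: "ran (hat A a) = cyl A Y"
  proof (intro equalityI subsetI)
    fix y assume "y \<in> ran (hat A a)"
    then obtain w where hw: "hat A a w = Some y" unfolding ran_def by blast
    then have "w \<in> cyl A X" using domh by blast
    then obtain x w' where xw: "w = x \<frown> w'" "x \<in> X" "w' \<in> omega_strings A" unfolding cyl_def by blast
    then have "y = f1 x \<frown> w'" using hX hw by simp
    moreover have "f1 x \<in> Y" unfolding Y_def using xw by blast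
    ultimately show "y \<in> cyl A Y" unfolding cyl_def using xw(3) by blast
  next
    fix y assume "y \<in> cyl A Y"
    then obtain u w' where uw: "y = u \<frown> w'" "u \<in> Y" "w' \<in> omega_strings A" unfolding cyl_def by blast
    then obtain x where "x \<in> X" "u = f1 x" unfolding Y_def by blast
    then have "hat A a (x \<frown> w') = Some y" using hX uw by simp
    then show "y \<in> ran (hat A a)" unfolding ran_def by blast
  qed
  have injh: "inj_on (hat A a) (dom (hat A a))" unfolding inj_on_def
  proof (intro ballI impI)
    fix w1 w2 assume w: "w1 \<in> dom (hat A a)" "w2 \<in> dom (hat A a)" "hat A a w1 = hat A a w2"
    obtain x1 s1 where xs1: "w1 = x1 \<frown> s1" "x1 \<in> X" "s1 \<in> omega_strings A"
      using w(1) domh unfolding cyl_def by blast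
    obtain x2 s2 where xs2: "w2 = x2 \<frown> s2" "x2 \<in> X" "s2 \<in> omega_strings A"
      using w(2) domh unfolding cyl_def by blast
    have eq: "f1 x1 \<frown> s1 = f1 x2 \<frown> s2" using w(3) hX xs1 xs2 by simp
    have Y12: "f1 x1 \<in> Y" "f1 x2 \<in> Y" unfolding Y_def using xs1 xs2 by blast+
    have f12: "f1 x1 = f1 x2"
    proof (rule ccontr)
      assume ne: "f1 x1 \<noteq> f1 x2"
      have pc: "\<forall>x\<in>Y. \<forall>y\<in>Y. x \<noteq> y \<longrightarrow> \<not> Sublist.prefix x y" using pcY unfolding prefix_code_def .
      have "\<not> Sublist.prefix (f1 x1) (f1 x2)" using pc[rule_format, OF Y12(1) Y12(2) ne] .
      moreover have "\<not> Sublist.prefix (f1 x2) (f1 x1)" using pc[rule_format, OF Y12(2) Y12(1) ne[symmetric]] .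
      ultimately show False using conc_prefix2[OF eq] by blast
    qed
    have "a x1 = Some (f1 x2)" using aX[OF xs1(2)] f12 by simp
    then have "x1 = x2" by (rule inj_Some[OF ia _ aX[OF xs2(2)]])
    then show "w1 = w2" using eq xs1 xs2 by simp
  qed
  have bij: "bij_betw f1 X Y" unfolding bij_betw_def Y_def
  proof
    show "inj_on f1 X" unfolding inj_on_def
    proof (intro ballI impI)
      fix x x' assume "x \<in> X" "x' \<in> X" "f1 x = f1 x'"
      then have "a x = Some (f1 x')" using aX by simp
      then show "x = x'" by (rule inj_Some[OF ia _ aX]) fact
    qed
  qed simp
  show ?thesis unfolding Cuntz_def
    apply (rule CollectI)
    apply (rule exI[of _ X], rule exI[of _ Y])
    apply (intro conjI finX finY XA YA pcX pcY domh ranh injh)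
    apply (rule exI[of _ f1])
    using bij hX by blast
qed


lemma pc_unique:
  assumes pc: "prefix_code X" and x: "x \<in> X" "x' \<in> X" and p: "Sublist.prefix x v" "Sublist.prefix x' v"
  shows "x = x'"
proof (rule ccontr)
  assume ne: "x \<noteq> x'"
  have h: "\<forall>x\<in>X. \<forall>y\<in>X. x \<noteq> y \<longrightarrow> \<not> Sublist.prefix x y" using pc unfolding prefix_code_def .
  have "\<not> Sublist.prefix x x'" using h[rule_format, OF x(1) x(2) ne] .
  moreover have "\<not> Sublist.prefix x' x" using h[rule_format, OF x(2) x(1) ne[symmetric]] .
  ultimately show False using prefix_same_cases[OF p] by blast
qed

lemma mem_appI: "y \<in> Y \<Longrightarrow> z \<in> lists A \<Longrightarrow> y @ z \<in> {y @ z | y z. y \<in> Y \<and> z \<in> lists A}"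
  by blast

lemma mem_appE: "v \<in> {y @ z | y z. y \<in> Y \<and> z \<in> lists A} \<Longrightarrow> (\<And>y z. v = y @ z \<Longrightarrow> y \<in> Y \<Longrightarrow> z \<in> lists A \<Longrightarrow> P) \<Longrightarrow> P"
  by blast

lemma Cuntz_surj:
  assumes f: "f \<in> Cuntz A"
  shows "\<exists>a\<in>CT A. hat A a = f"
proof -
  have "\<exists>X Y. finite X \<and> finite Y \<and> X \<subseteq> lists A \<and> Y \<subseteq> lists A \<and>
                 prefix_code X \<and> prefix_code Y \<and>
                 dom f = cyl A X \<and> ran f = cyl A Y \<and> inj_on f (dom f) \<and>
                 (\<exists>f1. bij_betw f1 X Y \<and>
                    (\<forall>x\<in>X. \<forall>w\<in>omega_strings A. f (x \<frown> w) = Some (f1 x \<frown> w)))"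
    using f unfolding Cuntz_def by (rule CollectD)
  then obtain X Y where h: "finite X \<and> finite Y \<and> X \<subseteq> lists A \<and> Y \<subseteq> lists A \<and>
                 prefix_code X \<and> prefix_code Y \<and>
                 dom f = cyl A X \<and> ran f = cyl A Y \<and> inj_on f (dom f) \<and>
                 (\<exists>f1. bij_betw f1 X Y \<and>
                    (\<forall>x\<in>X. \<forall>w\<in>omega_strings A. f (x \<frown> w) = Some (f1 x \<frown> w)))" by iprover
  have XY: "finite X" "finite Y" "X \<subseteq> lists A" "Y \<subseteq> lists A"
    "prefix_code X" "prefix_code Y" "dom f = cyl A X" "ran f = cyl A Y"
    using h by simp_all
  obtain f1 where bij: "bij_betw f1 X Y" and fx: "\<forall>x\<in>X. \<forall>w\<in>omega_strings A. f (x \<frown> w) = Some (f1 x \<frown> w)"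
    using h by iprover
  define T where "T = (\<lambda>v. THE x. x \<in> X \<and> Sublist.prefix x v)"
  define a where "a = (\<lambda>v. if v \<in> lists A \<and> (\<exists>x\<in>X. Sublist.prefix x v)
                           then Some (f1 (T v) @ drop (length (T v)) v) else None)"
  define D where "D = {x @ z | x z. x \<in> X \<and> z \<in> lists A}"
  define R where "R = {y @ z | y z. y \<in> Y \<and> z \<in> lists A}"
  have T: "T (x @ z) = x" if "x \<in> X" for x z
    unfolding T_def
  proof (rule the_equality)
    show "x \<in> X \<and> Sublist.prefix x (x @ z)" using that by simp
    fix x' assume "x' \<in> X \<and> Sublist.prefix x' (x @ z)"
    then have h: "x' \<in> X" "Sublist.prefix x' (x @ z)" by auto
    show "x' = x" by (rule pc_unique[OF XY(5) h(1) that h(2)]) simp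
  qed
  have app: "a (x @ z) = Some (f1 x @ z)" if "x \<in> X" "z \<in> lists A" for x z
  proof -
    have "x \<in> lists A" using that XY(3) by blast
    moreover have "\<exists>x'\<in>X. Sublist.prefix x' (x @ z)" using that(1) by (intro bexI[where x=x]) auto
    ultimately have "x @ z \<in> lists A \<and> (\<exists>x'\<in>X. Sublist.prefix x' (x @ z))" using that by simp
    then show ?thesis unfolding a_def using T[OF that(1)] by simp
  qed
  have domD: "v \<in> dom a \<Longrightarrow> \<exists>x z. v = x @ z \<and> x \<in> X \<and> z \<in> lists A" for v
  proof -
    assume "v \<in> dom a"
    then have h: "v \<in> lists A" "\<exists>x\<in>X. Sublist.prefix x v" unfolding a_def by (auto split: if_splits)
    then obtain x where x: "x \<in> X" "Sublist.prefix x v" by blast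
    from x(2) obtain z where "v = x @ z" by (rule prefixE)
    note x(1) this
    moreover have "z \<in> lists A" using h(1) calculation by simp
    ultimately show ?thesis by blast
  qed
  have doma: "dom a = D"
  proof (intro equalityI subsetI)
    fix v assume "v \<in> dom a"
    then obtain x z where "v = x @ z" "x \<in> X" "z \<in> lists A" using domD by blast
    then show "v \<in> D" unfolding D_def using mem_appI[of x X z A] by simp
  next
    fix v assume "v \<in> D"
    then obtain x z where "v = x @ z" "x \<in> X" "z \<in> lists A" unfolding D_def by (rule mem_appE)
    then show "v \<in> dom a" using app by blast
  qed
  have f1Y: "f1 x \<in> Y" if "x \<in> X" for x using bij that unfolding bij_betw_def by blast
  have rana: "ran a = R"
  proof (intro equalityI subsetI)
    fix y assume "y \<in> ran a"
    then obtain v where av: "a v = Some y" unfolding ran_def by blast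
    then obtain x z where xz: "v = x @ z" "x \<in> X" "z \<in> lists A" using domD by blast
    then have "y = f1 x @ z" using app av by simp
    then show "y \<in> R" unfolding R_def using mem_appI[OF f1Y[OF xz(2)] xz(3)] by simp
  next
    fix y assume "y \<in> R"
    then obtain y0 z where yz: "y = y0 @ z" "y0 \<in> Y" "z \<in> lists A" unfolding R_def by (rule mem_appE)
    then obtain x where "x \<in> X" "y0 = f1 x" using bij unfolding bij_betw_def by blast
    then have "a (x @ z) = Some y" using app yz by simp
    then show "y \<in> ran a" unfolding ran_def by blast
  qed
  have unbD: "unbounded A D v" if vD: "v \<in> D" for v
  proof -
    obtain x z where xz: "v = x @ z" "x \<in> X" "z \<in> lists A" using vD unfolding D_def by (rule mem_appE)
    have "v @ z' \<in> D" if "z' \<in> lists A" for z'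
      unfolding D_def using mem_appI[OF xz(2), of "z @ z'"] xz that by simp
    then show ?thesis unfolding unbounded_def using vD by blast
  qed
  have unbR: "unbounded A R y" if vD: "y \<in> R" for y
  proof -
    obtain x z where xz: "y = x @ z" "x \<in> Y" "z \<in> lists A" using vD unfolding R_def by (rule mem_appE)
    have "y @ z' \<in> R" if "z' \<in> lists A" for z'
      unfolding R_def using mem_appI[OF xz(2), of "z @ z'"] xz that by simp
    then show ?thesis unfolding unbounded_def using vD by blast
  qed
  have aCT: "a \<in> CT A"
  proof (rule CT_I)
    show "definite A (dom a)" unfolding doma D_def definite_def
      by (rule exI[of _ "{}"], rule exI[of _ X]) (use XY in auto)
    show "definite A (ran a)" unfolding rana R_def definite_def
      by (rule exI[of _ "{}"], rule exI[of _ Y]) (use XY in auto)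
    show "inj_on a (dom a)" unfolding inj_on_def
    proof (intro ballI impI)
      fix v1 v2 assume v: "v1 \<in> dom a" "v2 \<in> dom a" "a v1 = a v2"
      obtain x1 z1 where xz1: "v1 = x1 @ z1" "x1 \<in> X" "z1 \<in> lists A" using domD v(1) by blast
      obtain x2 z2 where xz2: "v2 = x2 @ z2" "x2 \<in> X" "z2 \<in> lists A" using domD v(2) by blast
      have eq: "f1 x1 @ z1 = f1 x2 @ z2" using v(3) app xz1 xz2 by simp
      have "f1 x1 = f1 x2"
        by (rule pc_unique[OF XY(6) f1Y[OF xz1(2)] f1Y[OF xz2(2)], where v="f1 x1 @ z1"])
           (simp, simp add: eq)
      then have "x1 = x2" using bij xz1(2) xz2(2) unfolding bij_betw_def by (meson inj_onD)
      then show "v1 = v2" using eq xz1 xz2 \<open>f1 x1 = f1 x2\<close> by simp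
    qed
    fix v assume vd: "v \<in> dom a"
    then obtain x z where xz: "v = x @ z" "x \<in> X" "z \<in> lists A" using domD by blast
    have ar: "the (a v) \<in> R" using the_ran[OF vd] rana by blast
    show "unbounded A (dom a) v \<longleftrightarrow> unbounded A (ran a) (the (a v))"
      using unbD[of v] unbR[OF ar] vd doma rana by simp
    fix y assume "unbounded A (dom a) v" "y \<in> lists A"
    then have "a (x @ (z @ y)) = Some (f1 x @ (z @ y))" using app xz by simp
    moreover have "the (a v) = f1 x @ z" using app xz by simp
    ultimately show "a (v @ y) = Some (the (a v) @ y)" using xz by simp
  qed
  have "hat A a = f"
  proof
    fix w
    show "hat A a w = f w"
    proof (cases "w \<in> cyl A X")
      case True
      then obtain x s where xs: "w = x \<frown> s" "x \<in> X" "s \<in> omega_strings A" unfolding cyl_def by blast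
      have "x \<in> D" unfolding D_def using mem_appI[OF xs(2), of "[]"] by simp
      have xl: "x \<in> lists A" using xs(2) XY(3) by blast
      have wo: "w \<in> omega_strings A" unfolding xs(1) by (rule conc_omega[OF xl xs(3)])
      have "unbounded A (dom a) (subsequence w 0 (length x))" using unbD \<open>x \<in> D\<close> doma xs(1) by simp
      then have "hat A a w = Some (the (a (subsequence w 0 (length x))) \<frown> sfx (length x) w)"
        by (rule hat_unb[OF aCT wo])
      also have "\<dots> = Some (f1 x \<frown> s)" using xs app[OF xs(2), of "[]"] by simp
      also have "\<dots> = f w" using fx xs by simp
      finally show ?thesis .
    next
      case False
      then have fw: "f w = None" using XY(7) by blast
      have "hat A a w = None"
      proof (rule ccontr)
        assume "hat A a w \<noteq> None"
        then obtain k where wo: "w \<in> omega_strings A" and k: "unbounded A (dom a) (subsequence w 0 k)"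
          using hat_SomeD by blast
        have "subsequence w 0 k \<in> D" using k doma unfolding unbounded_def by blast
        then obtain x z where xz: "subsequence w 0 k = x @ z" "x \<in> X" "z \<in> lists A" unfolding D_def by (rule mem_appE)
        have eq: "w = x \<frown> (z \<frown> sfx k w)" using xz(1) by (metis conc_conc prefix_suffix)
        have o: "z \<frown> sfx k w \<in> omega_strings A" using conc_omega[OF xz(3) suffix_omega[OF wo]] .
        have c: "x \<frown> (z \<frown> sfx k w) \<in> cyl A X" unfolding cyl_def using xz(2) o by blast
        have "w \<in> cyl A X" by (subst eq) (rule c)
        then show False using False by blast
      qed
      then show ?thesis using fw by simp
    qed
  qed
  then show ?thesis using aCT by blast
qed


lemma hat_comp:
  assumes fin: "finite A" and a: "a \<in> CT A" and b: "b \<in> CT A"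
  shows "hat A (a \<circ>\<^sub>m b) = hat A a \<circ>\<^sub>m hat A b"
proof
  fix w
  have c: "a \<circ>\<^sub>m b \<in> CT A" by (rule comp_CT[OF fin a b])
  obtain Na where va0: "valid A a Na" using valid_ex[OF a] by blast
  obtain Nb where vb0: "valid A b Nb" using valid_ex[OF b] by blast
  obtain Nc where vc0: "valid A (a \<circ>\<^sub>m b) Nc" using valid_ex[OF c] by blast
  define K where "K = Nb + Na + Nc"
  have vb: "valid A b K" by (rule valid_mono[OF vb0 b]) (simp add: K_def)
  have vc: "valid A (a \<circ>\<^sub>m b) K" by (rule valid_mono[OF vc0 c]) (simp add: K_def)
  show "hat A (a \<circ>\<^sub>m b) w = (hat A a \<circ>\<^sub>m hat A b) w"
  proof (cases "w \<in> omega_strings A")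
    case False then show ?thesis by (simp add: hat_outside)
  next
    case wo: True
    define p where "p = subsequence w 0 K"
    define s where "s = sfx K w"
    have so: "s \<in> omega_strings A" unfolding s_def by (rule suffix_omega[OF wo])
    have hc: "hat A (a \<circ>\<^sub>m b) w = (if p \<in> dom (a \<circ>\<^sub>m b) then Some (the ((a \<circ>\<^sub>m b) p) \<frown> s) else None)"
      unfolding p_def s_def by (rule hat_split[OF vc c wo])
    have hb: "hat A b w = (if p \<in> dom b then Some (the (b p) \<frown> s) else None)"
      unfolding p_def s_def by (rule hat_split[OF vb b wo])
    show ?thesis
    proof (cases "p \<in> dom b")
      case False
      then have "p \<notin> dom (a \<circ>\<^sub>m b)" unfolding dom_comp by blast
      then show ?thesis using hc hb False by simp
    next
      case True
      define u where "u = the (b p)"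
      have bp: "b p = Some u" using True unfolding u_def by auto
      have lp: "length p = K" unfolding p_def by simp
      have "b p = Some (the (b (take Nb p)) @ drop Nb p)" by (rule valid_eq[OF vb0 True]) (simp add: lp K_def)
      then have "Na \<le> length u" using bp lp unfolding K_def by auto
      moreover have ul: "u \<in> lists A" using CT_ran[OF b] bp by (meson ranI subsetD)
      ultimately have ha: "hat A a (u \<frown> s) = (if u \<in> dom a then Some (the (a u) \<frown> s) else None)"
        using hat_valid[OF va0 a ul _ so] by blast
      have "p \<in> dom (a \<circ>\<^sub>m b) \<longleftrightarrow> u \<in> dom a" unfolding dom_comp using bp True by simp
      moreover have "u \<in> dom a \<Longrightarrow> the ((a \<circ>\<^sub>m b) p) = the (a u)" using bp by simp
      ultimately show ?thesis using hc hb ha True bp by auto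
    qed
  qed
qed

lemma two_letters:
  assumes a01: "a0 \<in> A" "a1 \<in> A" "a0 \<noteq> a1"
    and h: "\<And>s. s \<in> omega_strings A \<Longrightarrow> u \<frown> s = v \<frown> s"
  shows "u = v"
proof -
  have o0: "(\<lambda>_. a0) \<in> omega_strings A" and o1: "(\<lambda>_. a1) \<in> omega_strings A"
    using a01 unfolding omega_strings_def by auto
  have e0: "u \<frown> (\<lambda>_. a0) = v \<frown> (\<lambda>_. a0)" by (rule h[OF o0])
  have e1: "u \<frown> (\<lambda>_. a1) = v \<frown> (\<lambda>_. a1)" by (rule h[OF o1])
  have "length u = length v"
  proof (rule ccontr)
    assume ne: "length u \<noteq> length v"
    show False
    proof (cases "length u < length v")
      case True
      have "(u \<frown> (\<lambda>_. a0)) (length u) = a0" by simp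
      moreover have "(v \<frown> (\<lambda>_. a0)) (length u) = v ! length u" using True by simp
      moreover have "(u \<frown> (\<lambda>_. a1)) (length u) = a1" by simp
      moreover have "(v \<frown> (\<lambda>_. a1)) (length u) = v ! length u" using True by simp
      ultimately show False using e0 e1 a01(3) by metis
    next
      case False
      then have lt: "length v < length u" using ne by simp
      have "(v \<frown> (\<lambda>_. a0)) (length v) = a0" by simp
      moreover have "(u \<frown> (\<lambda>_. a0)) (length v) = u ! length v" using lt by simp
      moreover have "(v \<frown> (\<lambda>_. a1)) (length v) = a1" by simp
      moreover have "(u \<frown> (\<lambda>_. a1)) (length v) = u ! length v" using lt by simp
      ultimately show False using e0 e1 a01(3) by metis
    qed
  qed
  then show ?thesis using e0 by simp
qed


lemma idems_D:
  assumes "e \<in> idems (CT A)" shows "e = idm (dom e)" "definite A (dom e)"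
proof -
  have e: "e \<in> CT A" "e \<circ>\<^sub>m e = e" using assms unfolding idems_def by auto
  show "definite A (dom e)" using CT_D(1)[OF e(1)] .
  show "e = idm (dom e)"
  proof
    fix x show "e x = idm (dom e) x"
    proof (cases "e x")
      case None then show ?thesis by (simp add: domIff)
    next
      case (Some y)
      have "(e \<circ>\<^sub>m e) x = e y" using Some by simp
      then have ey: "e y = Some y" using e(2) Some by simp
      have "x = y" by (rule inj_Some[OF CT_D(3)[OF e(1)] Some ey])
      then show ?thesis using Some by (simp add: domI)
    qed
  qed
qed

lemma idm_idems: assumes "definite A L" shows "idm L \<in> idems (CT A)"
proof -
  have "idm L \<circ>\<^sub>m idm L = idm L"
  proof
    fix x show "(idm L \<circ>\<^sub>m idm L) x = idm L x" by (cases "x \<in> L") simp_all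
  qed
  then show ?thesis unfolding idems_def using idm_CT[OF assms] by simp
qed

lemma idm_le: "idm L1 \<subseteq>\<^sub>m idm L2 \<longleftrightarrow> L1 \<subseteq> L2"
  unfolding map_le_def by (auto simp: idm_def split: if_splits)

lemma idm_empty: "idm {} = Map.empty"
  unfolding idm_def by simp

lemma definite_ops:
  assumes fin: "finite A" and d: "definite A L1" "definite A L2"
  shows "definite A (L1 \<inter> L2)" "definite A (L1 \<union> L2)" "definite A (L1 - L2)"
proof -
  obtain N1 where n1: "stab A N1 L1" and s1: "L1 \<subseteq> lists A" using definite_stab[OF d(1)] by blast
  obtain N2 where n2: "stab A N2 L2" and s2: "L2 \<subseteq> lists A" using definite_stab[OF d(2)] by blast
  have m1: "stab A (max N1 N2) L1" by (rule stab_mono[OF n1]) simp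
  have m2: "stab A (max N1 N2) L2" by (rule stab_mono[OF n2]) simp
  show "definite A (L1 \<inter> L2)" by (rule stab_definite[OF fin _ stab_Int[OF m1 m2]]) (use s1 in blast)
  show "definite A (L1 \<union> L2)" by (rule stab_definite[OF fin _ stab_Un[OF m1 m2]]) (use s1 s2 in blast)
  show "definite A (L1 - L2)" by (rule stab_definite[OF fin _ stab_Diff[OF m1 m2]]) (use s1 in blast)
qed

lemma the_glb:
  assumes "c \<in> S" "c \<subseteq>\<^sub>m a" "c \<subseteq>\<^sub>m b" "\<forall>d\<in>S. d \<subseteq>\<^sub>m a \<and> d \<subseteq>\<^sub>m b \<longrightarrow> d \<subseteq>\<^sub>m c"
  shows "glb_in S a b = c"
  unfolding glb_in_def
proof (rule the_equality)
  show "c \<in> S \<and> c \<subseteq>\<^sub>m a \<and> c \<subseteq>\<^sub>m b \<and> (\<forall>d\<in>S. d \<subseteq>\<^sub>m a \<and> d \<subseteq>\<^sub>m b \<longrightarrow> d \<subseteq>\<^sub>m c)"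
    using assms by blast
  fix c' assume h: "c' \<in> S \<and> c' \<subseteq>\<^sub>m a \<and> c' \<subseteq>\<^sub>m b \<and> (\<forall>d\<in>S. d \<subseteq>\<^sub>m a \<and> d \<subseteq>\<^sub>m b \<longrightarrow> d \<subseteq>\<^sub>m c')"
  have "c' \<subseteq>\<^sub>m c" using assms(4) h by blast
  moreover have "c \<subseteq>\<^sub>m c'" using assms(1-3) h by blast
  ultimately show "c' = c" by (rule map_le_antisym)
qed

lemma the_lub:
  assumes "c \<in> S" "a \<subseteq>\<^sub>m c" "b \<subseteq>\<^sub>m c" "\<forall>d\<in>S. a \<subseteq>\<^sub>m d \<and> b \<subseteq>\<^sub>m d \<longrightarrow> c \<subseteq>\<^sub>m d"
  shows "lub_in S a b = c"
  unfolding lub_in_def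
proof (rule the_equality)
  show "c \<in> S \<and> a \<subseteq>\<^sub>m c \<and> b \<subseteq>\<^sub>m c \<and> (\<forall>d\<in>S. a \<subseteq>\<^sub>m d \<and> b \<subseteq>\<^sub>m d \<longrightarrow> c \<subseteq>\<^sub>m d)"
    using assms by blast
  fix c' assume h: "c' \<in> S \<and> a \<subseteq>\<^sub>m c' \<and> b \<subseteq>\<^sub>m c' \<and> (\<forall>d\<in>S. a \<subseteq>\<^sub>m d \<and> b \<subseteq>\<^sub>m d \<longrightarrow> c' \<subseteq>\<^sub>m d)"
  have "c' \<subseteq>\<^sub>m c" using assms(1-3) h by blast
  moreover have "c \<subseteq>\<^sub>m c'" using assms(4) h by blast
  ultimately show "c' = c" by (rule map_le_antisym)
qed

lemma glb_idm:
  assumes fin: "finite A" and d: "definite A L1" "definite A L2"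
  shows "glb_in (idems (CT A)) (idm L1) (idm L2) = idm (L1 \<inter> L2)"
proof (rule the_glb)
  show "idm (L1 \<inter> L2) \<in> idems (CT A)" by (rule idm_idems[OF definite_ops(1)[OF fin d]])
  show "idm (L1 \<inter> L2) \<subseteq>\<^sub>m idm L1" "idm (L1 \<inter> L2) \<subseteq>\<^sub>m idm L2" by (simp_all add: idm_le)
  show "\<forall>d\<in>idems (CT A). d \<subseteq>\<^sub>m idm L1 \<and> d \<subseteq>\<^sub>m idm L2 \<longrightarrow> d \<subseteq>\<^sub>m idm (L1 \<inter> L2)"
  proof (intro ballI impI)
    fix d assume h: "d \<subseteq>\<^sub>m idm L1 \<and> d \<subseteq>\<^sub>m idm L2"
    show "d \<subseteq>\<^sub>m idm (L1 \<inter> L2)" unfolding map_le_def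
    proof
      fix x assume x: "x \<in> dom d"
      have e: "d x = idm L1 x" "d x = idm L2 x" using h x unfolding map_le_def by blast+
      then have "x \<in> L1" "x \<in> L2" using x by (auto simp: idm_def split: if_splits)
      then show "d x = idm (L1 \<inter> L2) x" using e by simp
    qed
  qed
qed

lemma lub_idm:
  assumes fin: "finite A" and d: "definite A L1" "definite A L2"
  shows "lub_in (idems (CT A)) (idm L1) (idm L2) = idm (L1 \<union> L2)"
proof (rule the_lub)
  show "idm (L1 \<union> L2) \<in> idems (CT A)" by (rule idm_idems[OF definite_ops(2)[OF fin d]])
  show "idm L1 \<subseteq>\<^sub>m idm (L1 \<union> L2)" "idm L2 \<subseteq>\<^sub>m idm (L1 \<union> L2)" by (simp_all add: idm_le)
  show "\<forall>d\<in>idems (CT A). idm L1 \<subseteq>\<^sub>m d \<and> idm L2 \<subseteq>\<^sub>m d \<longrightarrow> idm (L1 \<union> L2) \<subseteq>\<^sub>m d"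
    unfolding map_le_def by (auto simp: idm_def split: if_splits)
qed

lemma rel_compl_idm:
  assumes fin: "finite A" and d: "definite A L1" "definite A L2" and sub: "L2 \<subseteq> L1"
  shows "rel_compl (CT A) (idm L1) (idm L2) = idm (L1 - L2)"
  unfolding rel_compl_def
proof (rule the_equality)
  have dd: "definite A (L1 - L2)" by (rule definite_ops(3)[OF fin d])
  show "idm (L1 - L2) \<in> idems (CT A) \<and> idm (L1 - L2) \<subseteq>\<^sub>m idm L1 \<and>
        glb_in (idems (CT A)) (idm (L1 - L2)) (idm L2) = Map.empty \<and>
        lub_in (idems (CT A)) (idm (L1 - L2)) (idm L2) = idm L1"
  proof (intro conjI)
    show "idm (L1 - L2) \<in> idems (CT A)" by (rule idm_idems[OF dd])
    show "idm (L1 - L2) \<subseteq>\<^sub>m idm L1" by (simp add: idm_le)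
    have "(L1 - L2) \<inter> L2 = {}" by blast
    then show "glb_in (idems (CT A)) (idm (L1 - L2)) (idm L2) = Map.empty"
      using glb_idm[OF fin dd d(2)] idm_empty by simp
    have "(L1 - L2) \<union> L2 = L1" using sub by blast
    then show "lub_in (idems (CT A)) (idm (L1 - L2)) (idm L2) = idm L1"
      using lub_idm[OF fin dd d(2)] by simp
  qed
  fix g assume h: "g \<in> idems (CT A) \<and> g \<subseteq>\<^sub>m idm L1 \<and>
        glb_in (idems (CT A)) g (idm L2) = Map.empty \<and>
        lub_in (idems (CT A)) g (idm L2) = idm L1"
  define G where "G = dom g"
  have gG: "g = idm G" unfolding G_def using idems_D(1) h by blast
  have dG: "definite A G" unfolding G_def using idems_D(2) h by blast
  have "idm (G \<inter> L2) = Map.empty" using glb_idm[OF fin dG d(2)] h gG by simp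
  then have "dom (idm (G \<inter> L2)) = {}" by simp
  then have e1: "G \<inter> L2 = {}" by simp
  have "idm (G \<union> L2) = idm L1" using lub_idm[OF fin dG d(2)] h gG by simp
  then have "dom (idm (G \<union> L2)) = dom (idm L1)" by simp
  then have e2: "G \<union> L2 = L1" by simp
  have "G = L1 - L2" using e1 e2 by blast
  then show "g = idm (L1 - L2)" using gG by simp
qed


definition agree :: "('b \<Rightarrow> 'b option) \<Rightarrow> ('b \<Rightarrow> 'b option) \<Rightarrow> 'b set" where
  "agree a b = {x\<in>dom a. x \<in> dom b \<and> a x = b x}"

lemma agree_sym: "agree a b = agree b a"
  unfolding agree_def by auto

lemma common_valid:
  assumes a: "a \<in> CT A" and b: "b \<in> CT A"
  obtains N where "valid A a N" "valid A b N"
proof -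
  obtain Na where va: "valid A a Na" using valid_ex[OF a] by blast
  obtain Nb where vb: "valid A b Nb" using valid_ex[OF b] by blast
  have "valid A a (max Na Nb)" by (rule valid_mono[OF va a]) simp
  moreover have "valid A b (max Na Nb)" by (rule valid_mono[OF vb b]) simp
  ultimately show ?thesis using that by blast
qed

lemma agree_definite:
  assumes fin: "finite A" and a: "a \<in> CT A" and b: "b \<in> CT A"
  shows "definite A (agree a b)"
proof -
  obtain N where va: "valid A a N" and vb: "valid A b N" using common_valid[OF a b] by blast
  have "stab A N (agree a b)" unfolding stab_def
  proof (intro ballI impI)
    fix x assume xl: "x \<in> lists A" and len: "N \<le> length x"
    define t where "t = take N x"
    have da: "x \<in> dom a \<longleftrightarrow> t \<in> dom a" unfolding t_def by (rule stabD[OF valid_stab[OF va] xl len])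
    have db: "x \<in> dom b \<longleftrightarrow> t \<in> dom b" unfolding t_def by (rule stabD[OF valid_stab[OF vb] xl len])
    show "x \<in> agree a b \<longleftrightarrow> take N x \<in> agree a b"
    proof (cases "x \<in> dom a \<and> x \<in> dom b")
      case False then show ?thesis using da db unfolding agree_def t_def by auto
    next
      case True
      have ax: "a x = Some (the (a t) @ drop N x)" unfolding t_def using valid_eq[OF va _ len] True by blast
      have bx: "b x = Some (the (b t) @ drop N x)" unfolding t_def using valid_eq[OF vb _ len] True by blast
      have ta: "t \<in> dom a" "t \<in> dom b" using True da db by blast+
      have "a x = b x \<longleftrightarrow> the (a t) = the (b t)" using ax bx by simp
      also have "\<dots> \<longleftrightarrow> a t = b t" using ta by (auto simp: domIff)
      finally show ?thesis using True ta unfolding agree_def t_def by auto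
    qed
  qed
  moreover have "agree a b \<subseteq> lists A" unfolding agree_def using CT_dom[OF a] by blast
  ultimately show ?thesis using stab_definite[OF fin] by blast
qed

lemma agree_map_eq: "a \<circ>\<^sub>m idm (agree a b) = (\<lambda>x. if x \<in> agree a b then a x else None)"
  by (rule ext) (simp add: idm_def)

lemma glb_CT:
  assumes fin: "finite A" and a: "a \<in> CT A" and b: "b \<in> CT A"
  shows "glb_in (CT A) a b = a \<circ>\<^sub>m idm (agree a b)"
proof (rule the_glb)
  let ?m = "a \<circ>\<^sub>m idm (agree a b)"
  show "?m \<in> CT A" by (rule comp_CT[OF fin a idm_CT[OF agree_definite[OF fin a b]]])
  show "?m \<subseteq>\<^sub>m a" unfolding agree_map_eq map_le_def by (auto split: if_splits)
  show "?m \<subseteq>\<^sub>m b" unfolding map_le_def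
  proof
    fix x assume x: "x \<in> dom ?m"
    have e: "?m x = (if x \<in> agree a b then a x else None)" by (simp add: agree_map_eq)
    then have "x \<in> agree a b" using x by (auto split: if_splits)
    then show "?m x = b x" using e unfolding agree_def by simp
  qed
  show "\<forall>d\<in>CT A. d \<subseteq>\<^sub>m a \<and> d \<subseteq>\<^sub>m b \<longrightarrow> d \<subseteq>\<^sub>m ?m"
  proof (intro ballI impI)
    fix d assume h: "d \<subseteq>\<^sub>m a \<and> d \<subseteq>\<^sub>m b"
    show "d \<subseteq>\<^sub>m ?m" unfolding map_le_def
    proof
      fix x assume x: "x \<in> dom d"
      have e: "d x = a x" "d x = b x" using h x unfolding map_le_def by blast+
      then have "x \<in> agree a b" using x unfolding agree_def by (auto simp: domIff)
      then show "d x = ?m x" using e(1) unfolding agree_map_eq by simp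
    qed
  qed
qed

lemma dom_restr: "D \<subseteq> dom a \<Longrightarrow> dom (a \<circ>\<^sub>m idm D) = D"
  unfolding dom_comp by auto

lemma sdiff_CT:
  assumes fin: "finite A" and a: "a \<in> CT A" and m: "m \<in> CT A" and le: "m \<subseteq>\<^sub>m a"
  shows "sdiff (CT A) a m = a \<circ>\<^sub>m idm (dom a - dom m)"
proof -
  have sub: "dom m \<subseteq> dom a" using le by (rule map_le_implies_dom_le)
  have "rel_compl (CT A) (dd a) (dd m) = idm (dom a - dom m)"
    unfolding dd_eq[OF CT_D(3)[OF a]] dd_eq[OF CT_D(3)[OF m]]
    by (rule rel_compl_idm[OF fin CT_D(1)[OF a] CT_D(1)[OF m] sub])
  then show ?thesis unfolding sdiff_def by simp
qed

lemma If_restr: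
  assumes a: "a \<in> CT A" and D: "D \<subseteq> dom a"
  shows "a \<circ>\<^sub>m idm D \<in> If A \<longleftrightarrow> finite D"
proof -
  have d: "dom (a \<circ>\<^sub>m idm D) = D" by (rule dom_restr[OF D])
  have r: "ran (a \<circ>\<^sub>m idm D) \<subseteq> lists A"
  proof
    fix y assume "y \<in> ran (a \<circ>\<^sub>m idm D)"
    then obtain x where "(a \<circ>\<^sub>m idm D) x = Some y" unfolding ran_def by blast
    then obtain u where "a u = Some y" unfolding comp_Some by blast
    then have "y \<in> ran a" by (simp add: ranI)
    then show "y \<in> lists A" using CT_ran[OF a] by blast
  qed
  have i: "inj_on (a \<circ>\<^sub>m idm D) (dom (a \<circ>\<^sub>m idm D))" unfolding inj_on_def
  proof (intro ballI impI)
    fix x1 x2 assume h: "x1 \<in> dom (a \<circ>\<^sub>m idm D)" "x2 \<in> dom (a \<circ>\<^sub>m idm D)" "(a \<circ>\<^sub>m idm D) x1 = (a \<circ>\<^sub>m idm D) x2"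
    then have x: "x1 \<in> D" "x2 \<in> D" using d by auto
    then have "a x1 = a x2" using h(3) by simp
    moreover have "x1 \<in> dom a" "x2 \<in> dom a" using x D by auto
    ultimately show "x1 = x2" using CT_D(3)[OF a] by (meson inj_onD)
  qed
  have "D \<subseteq> lists A" using D CT_dom[OF a] by blast
  then show ?thesis unfolding If_def using d r i by auto
qed

lemma infinite_ext:
  assumes a0: "a0 \<in> A" and p: "\<forall>z\<in>lists A. p @ z \<in> S"
  shows "infinite S"
proof
  assume fS: "finite S"
  have "inj (\<lambda>k. p @ replicate k a0)" unfolding inj_def by auto
  moreover have "range (\<lambda>k. p @ replicate k a0) \<subseteq> S" using p a0 by auto
  ultimately have "finite (UNIV :: nat set)" using fS by (meson finite_imageD finite_subset)
  then show False by simp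
qed

lemma hat_eq_fin:
  assumes fin: "finite A" and a: "a \<in> CT A" and b: "b \<in> CT A" and a01: "a0 \<in> A" "a1 \<in> A" "a0 \<noteq> a1"
    and h: "hat A a = hat A b"
  shows "finite (dom a - agree a b)"
proof -
  obtain N where va: "valid A a N" and vb: "valid A b N" using common_valid[OF a b] by blast
  have "dom a - agree a b \<subseteq> {xs. set xs \<subseteq> A \<and> length xs \<le> N}"
  proof
    fix x assume x: "x \<in> dom a - agree a b"
    have xl: "x \<in> lists A" using x CT_dom[OF a] by blast
    have "length x < N"
    proof (rule ccontr)
      assume "\<not> length x < N"
      then have len: "N \<le> length x" by simp
      define t where "t = take N x"
      have tl: "t \<in> lists A" unfolding t_def by (rule take_lists[OF xl])
      have lt: "N \<le> length t" unfolding t_def using len by simp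
      have da: "x \<in> dom a \<longleftrightarrow> t \<in> dom a" unfolding t_def by (rule stabD[OF valid_stab[OF va] xl len])
      have db: "x \<in> dom b \<longleftrightarrow> t \<in> dom b" unfolding t_def by (rule stabD[OF valid_stab[OF vb] xl len])
      have ta: "t \<in> dom a" using x da by blast
      have hs: "\<And>s. s \<in> omega_strings A \<Longrightarrow> Some (the (a t) \<frown> s) = (if t \<in> dom b then Some (the (b t) \<frown> s) else None)"
      proof -
        fix s assume so: "s \<in> omega_strings A"
        have "hat A a (t \<frown> s) = Some (the (a t) \<frown> s)" using hat_valid[OF va a tl lt so] ta by simp
        moreover have "hat A b (t \<frown> s) = (if t \<in> dom b then Some (the (b t) \<frown> s) else None)"
          by (rule hat_valid[OF vb b tl lt so])
        ultimately show "Some (the (a t) \<frown> s) = (if t \<in> dom b then Some (the (b t) \<frown> s) else None)"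
          using h by simp
      qed
      have so: "(\<lambda>_. a0) \<in> omega_strings A" using a01 unfolding omega_strings_def by simp
      have tb: "t \<in> dom b" using hs[OF so] by (auto split: if_splits)
      have "\<And>s. s \<in> omega_strings A \<Longrightarrow> the (a t) \<frown> s = the (b t) \<frown> s" using hs tb by simp
      then have eq: "the (a t) = the (b t)" by (rule two_letters[OF a01])
      have xb: "x \<in> dom b" using tb db by blast
      have "a x = Some (the (a t) @ drop N x)" unfolding t_def using valid_eq[OF va _ len] x by blast
      moreover have "b x = Some (the (b t) @ drop N x)" unfolding t_def using valid_eq[OF vb xb len] by blast
      ultimately have "a x = b x" using eq by simp
      then have "x \<in> agree a b" using x xb unfolding agree_def by blast
      then show False using x by blast
    qed
    then show "x \<in> {xs. set xs \<subseteq> A \<and> length xs \<le> N}" using xl by (auto simp: in_lists_conv_set)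
  qed
  moreover have "finite {xs. set xs \<subseteq> A \<and> length xs \<le> N}" by (rule finite_lists_length_le[OF fin])
  ultimately show ?thesis by (rule finite_subset)
qed


lemma meet_props:
  assumes fin: "finite A" and a: "a \<in> CT A" and b: "b \<in> CT A"
  shows "a \<circ>\<^sub>m idm (agree a b) \<in> CT A" "a \<circ>\<^sub>m idm (agree a b) \<subseteq>\<^sub>m a"
    "a \<circ>\<^sub>m idm (agree a b) \<subseteq>\<^sub>m b" "dom (a \<circ>\<^sub>m idm (agree a b)) = agree a b"
proof -
  let ?m = "a \<circ>\<^sub>m idm (agree a b)"
  show "?m \<in> CT A" by (rule comp_CT[OF fin a idm_CT[OF agree_definite[OF fin a b]]])
  show "?m \<subseteq>\<^sub>m a" unfolding agree_map_eq map_le_def by (auto split: if_splits)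
  show "?m \<subseteq>\<^sub>m b" unfolding map_le_def
  proof
    fix x assume x: "x \<in> dom ?m"
    have e: "?m x = (if x \<in> agree a b then a x else None)" by (simp add: agree_map_eq)
    then have "x \<in> agree a b" using x by (auto split: if_splits)
    then show "?m x = b x" using e unfolding agree_def by simp
  qed
  show "dom ?m = agree a b" by (rule dom_restr) (auto simp: agree_def)
qed

lemma side_infinite:
  assumes va: "valid A a N" and vb: "valid A b N" and a: "a \<in> CT A" and b: "b \<in> CT A"
    and pl: "p \<in> lists A" and lp: "length p = N" and pa: "p \<in> dom a" and pn: "p \<notin> agree a b"
    and a0: "a0 \<in> A"
  shows "infinite (dom a - agree a b)"
proof (rule infinite_ext[OF a0])
  show "\<forall>z\<in>lists A. p @ z \<in> dom a - agree a b"
  proof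
    fix z assume zl: "z \<in> lists A"
    have az: "a (p @ z) = Some (the (a p) @ z)" by (rule valid_app[OF va a pa _ zl]) (simp add: lp)
    then have pza: "p @ z \<in> dom a" by blast
    have "p @ z \<notin> agree a b"
    proof
      assume ag: "p @ z \<in> agree a b"
      then have pzb: "p @ z \<in> dom b" unfolding agree_def by blast
      have pzl: "p @ z \<in> lists A" using pl zl by simp
      have "p @ z \<in> dom b \<longleftrightarrow> take N (p @ z) \<in> dom b"
        by (rule stabD[OF valid_stab[OF vb] pzl]) (simp add: lp)
      then have pb: "p \<in> dom b" using pzb lp by simp
      have bz: "b (p @ z) = Some (the (b p) @ z)" by (rule valid_app[OF vb b pb _ zl]) (simp add: lp)
      have "a (p @ z) = b (p @ z)" using ag unfolding agree_def by blast
      then have "the (a p) = the (b p)" using az bz by simp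
      then have "a p = b p" using pa pb by (auto simp: domIff)
      then have "p \<in> agree a b" using pa pb unfolding agree_def by blast
      then show False using pn by blast
    qed
    then show "p @ z \<in> dom a - agree a b" using pza by blast
  qed
qed

lemma fin_hat:
  assumes fin: "finite A" and a: "a \<in> CT A" and b: "b \<in> CT A" and a0: "a0 \<in> A"
    and fa: "finite (dom a - agree a b)" and fb: "finite (dom b - agree a b)"
  shows "hat A a = hat A b"
proof
  fix w
  obtain N where va: "valid A a N" and vb: "valid A b N" using common_valid[OF a b] by blast
  show "hat A a w = hat A b w"
  proof (cases "w \<in> omega_strings A")
    case False then show ?thesis by (simp add: hat_outside)
  next
    case wo: True
    define p where "p = subsequence w 0 N"
    have pl: "p \<in> lists A" unfolding p_def by (rule subseq_lists[OF wo])
    have lp: "length p = N" unfolding p_def by simp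
    have ha: "hat A a w = (if p \<in> dom a then Some (the (a p) \<frown> sfx N w) else None)"
      unfolding p_def by (rule hat_split[OF va a wo])
    have hb: "hat A b w = (if p \<in> dom b then Some (the (b p) \<frown> sfx N w) else None)"
      unfolding p_def by (rule hat_split[OF vb b wo])
    have c1: "p \<in> dom a \<Longrightarrow> p \<in> agree a b"
      using side_infinite[OF va vb a b pl lp _ _ a0] fa by blast
    have c2: "p \<in> dom b \<Longrightarrow> p \<in> agree a b"
      using side_infinite[OF vb va b a pl lp _ _ a0] fb agree_sym[of a b] by metis
    show ?thesis
    proof (cases "p \<in> agree a b")
      case True
      then have "p \<in> dom a" "p \<in> dom b" "a p = b p" unfolding agree_def by blast+
      then show ?thesis using ha hb by simp
    next
      case False
      then have "p \<notin> dom a" "p \<notin> dom b" using c1 c2 by blast+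
      then show ?thesis using ha hb by simp
    qed
  qed
qed

lemma epsI_iff:
  assumes fin: "finite A" and a01: "a0 \<in> A" "a1 \<in> A" "a0 \<noteq> a1" and a: "a \<in> CT A" and b: "b \<in> CT A"
  shows "(a, b) \<in> epsI (CT A) (If A) \<longleftrightarrow> hat A a = hat A b"
proof -
  let ?m = "a \<circ>\<^sub>m idm (agree a b)"
  note mp = meet_props[OF fin a b]
  have g: "glb_in (CT A) a b = ?m" by (rule glb_CT[OF fin a b])
  have sa: "sdiff (CT A) a ?m = a \<circ>\<^sub>m idm (dom a - agree a b)"
    using sdiff_CT[OF fin a mp(1) mp(2)] mp(4) by simp
  have sb: "sdiff (CT A) b ?m = b \<circ>\<^sub>m idm (dom b - agree a b)"
    using sdiff_CT[OF fin b mp(1) mp(3)] mp(4) by simp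
  have ia: "sdiff (CT A) a ?m \<in> If A \<longleftrightarrow> finite (dom a - agree a b)"
    unfolding sa by (rule If_restr[OF a]) blast
  have ib: "sdiff (CT A) b ?m \<in> If A \<longleftrightarrow> finite (dom b - agree a b)"
    unfolding sb by (rule If_restr[OF b]) blast
  have "(a, b) \<in> epsI (CT A) (If A) \<longleftrightarrow> finite (dom a - agree a b) \<and> finite (dom b - agree a b)"
    unfolding epsI_def using a b ia ib g by simp
  also have "\<dots> \<longleftrightarrow> hat A a = hat A b"
  proof
    assume "finite (dom a - agree a b) \<and> finite (dom b - agree a b)"
    then show "hat A a = hat A b" using fin_hat[OF fin a b a01(1)] by blast
  next
    assume h: "hat A a = hat A b"
    have "finite (dom a - agree a b)" by (rule hat_eq_fin[OF fin a b a01 h])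
    moreover have "finite (dom b - agree b a)" by (rule hat_eq_fin[OF fin b a a01 h[symmetric]])
    ultimately show "finite (dom a - agree a b) \<and> finite (dom b - agree a b)"
      using agree_sym[of a b] by simp
  qed
  finally show ?thesis .
qed


theorem proposition3p17:
  fixes A :: "'a set" and n :: nat
  assumes "finite A" and "card A = n" and "n \<ge> 2"
  shows "\<exists>\<Phi>. bij_betw \<Phi> (CT A // epsI (CT A) (If A)) (Cuntz A) \<and>
           (\<forall>a\<in>CT A. \<forall>b\<in>CT A.
              \<Phi> (epsI (CT A) (If A) `` {a \<circ>\<^sub>m b}) =
              \<Phi> (epsI (CT A) (If A) `` {a}) \<circ>\<^sub>m \<Phi> (epsI (CT A) (If A) `` {b}))"
proof -
  have fin: "finite A" using assms(1) .
  have "\<not> card A \<le> Suc 0" using assms(2,3) by simp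
  then obtain a0 a1 where a01: "a0 \<in> A" "a1 \<in> A" "a0 \<noteq> a1"
    using card_le_Suc0_iff_eq[OF fin] by blast
  define E where "E = epsI (CT A) (If A)"
  have Esub: "E \<subseteq> CT A \<times> CT A" unfolding E_def epsI_def by blast
  have cls: "E `` {a} = {b\<in>CT A. hat A b = hat A a}" if a: "a \<in> CT A" for a
  proof (intro equalityI subsetI)
    fix b assume "b \<in> E `` {a}"
    then have ab: "(a, b) \<in> E" by blast
    then have b: "b \<in> CT A" using Esub by blast
    have "hat A a = hat A b" using ab epsI_iff[OF fin a01 a b] unfolding E_def by blast
    then show "b \<in> {b\<in>CT A. hat A b = hat A a}" using b by simp
  next
    fix b assume "b \<in> {b\<in>CT A. hat A b = hat A a}"
    then have b: "b \<in> CT A" and h: "hat A b = hat A a" by auto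
    have "(a, b) \<in> E" using epsI_iff[OF fin a01 a b] h unfolding E_def by simp
    then show "b \<in> E `` {a}" by blast
  qed
  define \<Phi> where "\<Phi> = (\<lambda>C. hat A (SOME b. b \<in> C))"
  have phi: "\<Phi> (E `` {a}) = hat A a" if a: "a \<in> CT A" for a
  proof -
    have "a \<in> E `` {a}" using cls[OF a] a by simp
    then have "(SOME b. b \<in> E `` {a}) \<in> E `` {a}" by (rule someI[where P="\<lambda>b. b \<in> E `` {a}"])
    then show ?thesis unfolding \<Phi>_def using cls[OF a] by simp
  qed
  have quot: "C \<in> CT A // E \<longleftrightarrow> (\<exists>a\<in>CT A. C = E `` {a})" for C
    unfolding quotient_def by blast
  have bij: "bij_betw \<Phi> (CT A // E) (Cuntz A)"
    unfolding bij_betw_def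
  proof
    show "inj_on \<Phi> (CT A // E)" unfolding inj_on_def
    proof (intro ballI impI)
      fix C1 C2 assume c: "C1 \<in> CT A // E" "C2 \<in> CT A // E" "\<Phi> C1 = \<Phi> C2"
      obtain a where a: "a \<in> CT A" "C1 = E `` {a}" using c(1) quot[of C1] by blast
      obtain b where b: "b \<in> CT A" "C2 = E `` {b}" using c(2) quot[of C2] by blast
      have "hat A a = hat A b" using c(3) phi a b by simp
      then show "C1 = C2" using cls a b by simp
    qed
    show "\<Phi> ` (CT A // E) = Cuntz A"
    proof (intro equalityI subsetI)
      fix f assume "f \<in> \<Phi> ` (CT A // E)"
      then obtain C where C: "C \<in> CT A // E" "f = \<Phi> C" by blast
      then obtain a where a: "a \<in> CT A" "C = E `` {a}" using quot[of C] by blast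
      then have "f = hat A a" using C(2) phi by simp
      then show "f \<in> Cuntz A" using hat_Cuntz[OF fin a(1)] by simp
    next
      fix f assume "f \<in> Cuntz A"
      then obtain a where a: "a \<in> CT A" "hat A a = f" using Cuntz_surj by blast
      have "E `` {a} \<in> CT A // E" using quot[of "E `` {a}"] a by blast
      moreover have "\<Phi> (E `` {a}) = f" using phi a by simp
      ultimately show "f \<in> \<Phi> ` (CT A // E)" by blast
    qed
  qed
  have hom: "\<forall>a\<in>CT A. \<forall>b\<in>CT A. \<Phi> (E `` {a \<circ>\<^sub>m b}) = \<Phi> (E `` {a}) \<circ>\<^sub>m \<Phi> (E `` {b})"
  proof (intro ballI)
    fix a b assume a: "a \<in> CT A" and b: "b \<in> CT A"
    have "a \<circ>\<^sub>m b \<in> CT A" by (rule comp_CT[OF fin a b])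
    then show "\<Phi> (E `` {a \<circ>\<^sub>m b}) = \<Phi> (E `` {a}) \<circ>\<^sub>m \<Phi> (E `` {b})"
      using phi a b hat_comp[OF fin a b] by simp
  qed
  show ?thesis using bij hom unfolding E_def by blast
qed


end
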